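(* Assume all conditions (C1)–(C6) below hold and $p(X)=p(\tilde X)=q(V^\top X)$. Write $A\preceq B$ if the asymptotic variance (of $\sqrt{nh^l}(\hat\tau-\tau(z))$) of estimator $A$ is not greater than that of $B$ at every $z$, and $A\cong B$ if they are equal. Then for each $z$ in the support of $Z$: Case 1: If $\tilde X=X$ (so $|Z\cap\tilde X|=l$) and $|Z\cap V^\top X|=l$, then IPW-N $\preceq$ IPW-S $\preceq$ IPW-P $\cong$ IPW-O, and more precisely $$\sigma_P^2(z)=\sigma_S^{*2}(z)+E\Big[q(V^\top X)(1-q(V^\top X))\Big\{\frac{m_1(V^\top X)}{q(V^\top X)}+\frac{m_0(V^\top X)}{1-q(V^\top X)}\Big\}^2\Big|Z=z\Big],$$ $$\sigma_S^{*2}(z)=\sigma_N^{*2}(z)+E\Big[q(V^\top X)(1-q(V^\top X))\Big\{\frac{\Delta m_1}{q(V^\top X)}+\frac{\Delta m_0}{1-q(V^\top X)}\Big\}^2\Big|Z=z\Big],$$ where $\Delta m_j=m_j(X)-m_j(V^\top X)$. Case 2: If $\tilde X=X$ but $|Z\cap V^\top X|=t$ with $0\le t<l$ (and $s_2[2-l/(l-t)]+l>0$), then IPW-N $\preceq$ IPW-S $\cong$ IPW-P $\cong$ IPW-O, with $\sigma_S^2(z)=\sigma_P^2(z)=\sigma_O^2(z)$. Case 3: If $\tilde X\subsetneq X$ with $|Z\cap\tilde X|=t$ and $|Z\cap V^\top X|=t$, $0\le t<l$ (and $s_1[2-l/(l-t)]+l>0$, $s_2[2-l/(l-t)]+l>0$),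 then IPW-N $\cong$ IPW-S $\cong$ IPW-P $\cong$ IPW-O, with $\sigma_N^2(z)=\sigma_S^2(z)=\sigma_P^2(z)=\sigma_O^2(z)$.
   Context: Setting: $D\in\{0,1\}$ binary treatment, potential outcomes $Y(0),Y(1)$, observed $Y=DY(1)+(1-D)Y(0)$; covariates $X=(Z^\top,U^\top)^\top\in\mathbb R^k$, $Z\in\mathbb R^l$, $k$ fixed, $X$ absolutely continuous; $\mathcal W=(X,D,Y)$, data i.i.d. copies $\mathcal W_i$, $i\le n$. $p(X)=P(D=1\mid X)$, $f$ density of $Z$, $\tau(z)=E[Y(1)-Y(0)\mid Z=z]$. $K$ kernel on $\mathbb R^l$, $K_h(u)=h^{-l}K(u/h)$, $\|K\|_2^2=\int K^2$. Kernel of order $s$: integrates to one, all moments of total degree $1,\dots,s-1$ vanish, some of degree $s$ nonzero. $m_j(X)=E[Y(j)\mid X]$, $m_j(V^\top X)=E[Y(j)\mid V^\top X]$. Structures: $p(X)=q(V^\top X)$, $V$ an unknown $k\times r$ orthonormal matrix; $\tilde X$ a subvector of $X$ of dimension $\tilde k$ with $D\perp X\mid\tilde X$. $|Z\cap A|=t$ means exactly $t$ components of $Z$ are components of the vector $A$ (for $V^\top X$, up to rotation). Estimators, each of the form $\Big(\sum_i\Big[\frac{D_iY_i}{\pi_i}-\frac{(1-D_i)Y_i}{1-\pi_i}\Big]K_h(Z_i-z)\Big)/\sum_iK_h(Z_i-z)$ with: IPW-O: $\pi_i=p(X_i)$ (true score); IPW-P: $\pi_i=p(X_i;\hat\beta)$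 from a correctly specified parametric model estimated at rate $n^{-1/2}$; IPW-S: $\pi_i=\hat q(\hat V^\top X_i)=\sum_{j\ne i}D_j\mathcal H_{h_2}(\hat V^\top X_j-\hat V^\top X_i)/\sum_{j\ne i}\mathcal H_{h_2}(\hat V^\top X_j-\hat V^\top X_i)$ with $\mathcal H_{h_2}(u)=h_2^{-r}\mathcal H(u/h_2)$; IPW-N: $\pi_i=\hat p(\tilde X_i)=\sum_{j\ne i}D_j\mathcal L_{h_1}(\tilde X_j-\tilde X_i)/\sum_{j\ne i}\mathcal L_{h_1}(\tilde X_j-\tilde X_i)$ with $\mathcal L_{h_1}(u)=h_1^{-\tilde k}\mathcal L(u/h_1)$. Asymptotic variances of $\sqrt{nh^l}(\hat\tau-\tau(z))$ are $\|K\|_2^2\sigma^2(z)/f(z)$ with: $\sigma_O^2(z)=E([\frac{DY}{p(X)}-\frac{(1-D)Y}{1-p(X)}-\tau(z)]^2\mid Z=z)$; $\sigma_P^2(z)$ the IPW-P variance (known to equal $\sigma_O^2(z)$); $\sigma_S^2(z)=E[\{\psi(q(V^\top X),\mathcal W)-\tau(z)\}^2\mid Z=z]$, $\sigma_S^{*2}(z)=E[\{\psi^*(q(V^\top X),\mathcal W)-\tau(z)\}^2\mid Z=z]$, $\sigma_N^2(z)=E[\{\psi(p(\tilde X),\mathcal W)-\tau(z)\}^2\mid Z=z]$, $\sigma_N^{*2}(z)=E[\{\psi^*(p(\tilde X),\mathcal W)-\tau(z)\}^2\mid Z=z]$, where for a score function $\pi$ of a vector $A$ (either $A=V^\top X$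 with $\pi=q$, or $A=\tilde X$ with $\pi=p$), $\psi(\pi(A),\mathcal W)=\frac{DY}{\pi(A)}-\frac{(1-D)Y}{1-\pi(A)}$ and $\psi^*(\pi(A),\mathcal W)=\frac{D\{Y-m_1(A)\}}{\pi(A)}-\frac{(1-D)\{Y-m_0(A)\}}{1-\pi(A)}+m_1(A)-m_0(A)$, $m_j(A)=E[Y(j)\mid A]$. (IPW-S has variance $\sigma_S^{*2}$ if $|Z\cap V^\top X|=l$ and $\sigma_S^2$ if $<l$; IPW-N has $\sigma_N^{*2}$ if $|Z\cap\tilde X|=l$ and $\sigma_N^2$ if $<l$.) Conditions: (C1) $(Y(0),Y(1))\perp D\mid X$, $c<p(X)<1-c$. (C2) Support of $X$ a Cartesian product of compact intervals; densities of $Z$, $X$ bounded away from zero and infinity, $s\ge r$ times continuously differentiable. (C3) $\sup_xE[Y(j)^2\mid X=x]<\infty$; $m_j(V^\top X)$ $s\ge r$ times continuously differentiable. (C4) $\mathcal L$ kernel of order $s_1$, symmetric, supported on $[-1,1]^{\tilde k}$, continuously differentiable; $\mathcal H$ kernel of order $s_2$, symmetric, supported on $[-1,1]^r$, continuously differentiable; $K$ kernel of order $s$, symmetric, $s$ times continuously differentiable. (C5) $h\to0$, $nh^l\to\infty$, $nh^{2s+l}\to0$; $h_1,h_2\to0$, $\log(n)/(nh_2^{r+s_2})\to0$, $\log(n)/(nh_1^{\tilde k+s_1})\to0$; $h_i^{2s_i}h^{-2s_i-l}\to0$ and $nh^lh_i^{2s_i}\to0$, $i=1,2$. (C6) $r$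 known, $\hat V-V=O_p(n^{-1/2})$. *)

theory Defs
  imports "HOL-Probability.Probability"
begin

definition condE :: "'a measure \<Rightarrow> ('a \<Rightarrow> 'b::topological_space) \<Rightarrow> ('a \<Rightarrow> real) \<Rightarrow> 'a \<Rightarrow> real" where
  "condE M W f = real_cond_exp M (vimage_algebra (space M) W borel) f"

definition cond_indep :: "'a measure \<Rightarrow> ('a \<Rightarrow> 'u::topological_space) \<Rightarrow> ('a \<Rightarrow> 'w::topological_space)
     \<Rightarrow> ('a \<Rightarrow> 'x::topological_space) \<Rightarrow> bool" where
  "cond_indep M U W X \<longleftrightarrow>
     (\<forall>B \<in> sets borel. \<forall>C \<in> sets borel. AE \<omega> in M.
        condE M X (\<lambda>\<omega>. indicator B (U \<omega>) * indicator C (W \<omega>)) \<omega>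
        = condE M X (\<lambda>\<omega>. indicator B (U \<omega>)) \<omega> * condE M X (\<lambda>\<omega>. indicator C (W \<omega>)) \<omega>)"

definition subvec :: "('l \<Rightarrow> 'k) \<Rightarrow> real^'k \<Rightarrow> real^'l" where
  "subvec idx x = (\<chi> i. x $ idx i)"

definition Yobs :: "('a \<Rightarrow> real) \<Rightarrow> ('a \<Rightarrow> real) \<Rightarrow> ('a \<Rightarrow> real) \<Rightarrow> 'a \<Rightarrow> real" where
  "Yobs D Y1 Y0 \<omega> = D \<omega> * Y1 \<omega> + (1 - D \<omega>) * Y0 \<omega>"

definition psi :: "real \<Rightarrow> real \<Rightarrow> real \<Rightarrow> real" where
  "psi \<pi> d y = d * y / \<pi> - (1 - d) * y / (1 - \<pi>)"

definition psistar :: "real \<Rightarrow> real \<Rightarrow> real \<Rightarrow> real \<Rightarrow> real \<Rightarrow> real" where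
  "psistar \<pi> m1 m0 d y = d * (y - m1) / \<pi> - (1 - d) * (y - m0) / (1 - \<pi>) + m1 - m0"

definition sig2 :: "'a measure \<Rightarrow> ('a \<Rightarrow> 'z::topological_space) \<Rightarrow> ('a \<Rightarrow> real) \<Rightarrow> ('a \<Rightarrow> real)
     \<Rightarrow> ('a \<Rightarrow> real) \<Rightarrow> 'a \<Rightarrow> real" where
  "sig2 M Z Y1 Y0 g = condE M Z (\<lambda>\<omega>. (g \<omega> - condE M Z (\<lambda>\<omega>'. Y1 \<omega>' - Y0 \<omega>') \<omega>)\<^sup>2)"

text \<open>Z = subvector of X via zidx; Xt = subvector of X via tidx; A = V^T X.\<close>
definition sigma_O :: "'a measure \<Rightarrow> ('a \<Rightarrow> real^'k::finite) \<Rightarrow> ('a \<Rightarrow> real) \<Rightarrow> ('a \<Rightarrow> real) \<Rightarrow> ('a \<Rightarrow> real)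
     \<Rightarrow> ('l::finite \<Rightarrow> 'k) \<Rightarrow> 'a \<Rightarrow> real" where
  "sigma_O M X D Y0 Y1 zidx = sig2 M (\<lambda>\<omega>. subvec zidx (X \<omega>)) Y1 Y0
     (\<lambda>\<omega>. psi (condE M X D \<omega>) (D \<omega>) (Yobs D Y1 Y0 \<omega>))"

text \<open>The IPW-P variance is known (prior result in the paper) to equal sigma_O.\<close>
definition sigma_P :: "'a measure \<Rightarrow> ('a \<Rightarrow> real^'k::finite) \<Rightarrow> ('a \<Rightarrow> real) \<Rightarrow> ('a \<Rightarrow> real) \<Rightarrow> ('a \<Rightarrow> real)
     \<Rightarrow> ('l::finite \<Rightarrow> 'k) \<Rightarrow> 'a \<Rightarrow> real" where
  "sigma_P M X D Y0 Y1 zidx = sigma_O M X D Y0 Y1 zidx"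

definition sigma_S :: "'a measure \<Rightarrow> ('a \<Rightarrow> real^'k::finite) \<Rightarrow> ('a \<Rightarrow> real) \<Rightarrow> ('a \<Rightarrow> real) \<Rightarrow> ('a \<Rightarrow> real)
     \<Rightarrow> ('l::finite \<Rightarrow> 'k) \<Rightarrow> real^'r::finite^'k \<Rightarrow> 'a \<Rightarrow> real" where
  "sigma_S M X D Y0 Y1 zidx V = sig2 M (\<lambda>\<omega>. subvec zidx (X \<omega>)) Y1 Y0
     (\<lambda>\<omega>. psi (condE M (\<lambda>\<omega>. transpose V *v X \<omega>) D \<omega>) (D \<omega>) (Yobs D Y1 Y0 \<omega>))"

definition sigma_Sstar :: "'a measure \<Rightarrow> ('a \<Rightarrow> real^'k::finite) \<Rightarrow> ('a \<Rightarrow> real) \<Rightarrow> ('a \<Rightarrow> real) \<Rightarrow> ('a \<Rightarrow> real)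
     \<Rightarrow> ('l::finite \<Rightarrow> 'k) \<Rightarrow> real^'r::finite^'k \<Rightarrow> 'a \<Rightarrow> real" where
  "sigma_Sstar M X D Y0 Y1 zidx V = sig2 M (\<lambda>\<omega>. subvec zidx (X \<omega>)) Y1 Y0
     (\<lambda>\<omega>. psistar (condE M (\<lambda>\<omega>. transpose V *v X \<omega>) D \<omega>)
                  (condE M (\<lambda>\<omega>. transpose V *v X \<omega>) Y1 \<omega>)
                  (condE M (\<lambda>\<omega>. transpose V *v X \<omega>) Y0 \<omega>)
                  (D \<omega>) (Yobs D Y1 Y0 \<omega>))"

definition sigma_N :: "'a measure \<Rightarrow> ('a \<Rightarrow> real^'k::finite) \<Rightarrow> ('a \<Rightarrow> real) \<Rightarrow> ('a \<Rightarrow> real) \<Rightarrow> ('a \<Rightarrow> real)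
     \<Rightarrow> ('l::finite \<Rightarrow> 'k) \<Rightarrow> ('kt::finite \<Rightarrow> 'k) \<Rightarrow> 'a \<Rightarrow> real" where
  "sigma_N M X D Y0 Y1 zidx tidx = sig2 M (\<lambda>\<omega>. subvec zidx (X \<omega>)) Y1 Y0
     (\<lambda>\<omega>. psi (condE M (\<lambda>\<omega>. subvec tidx (X \<omega>)) D \<omega>) (D \<omega>) (Yobs D Y1 Y0 \<omega>))"

definition sigma_Nstar :: "'a measure \<Rightarrow> ('a \<Rightarrow> real^'k::finite) \<Rightarrow> ('a \<Rightarrow> real) \<Rightarrow> ('a \<Rightarrow> real) \<Rightarrow> ('a \<Rightarrow> real)
     \<Rightarrow> ('l::finite \<Rightarrow> 'k) \<Rightarrow> ('kt::finite \<Rightarrow> 'k) \<Rightarrow> 'a \<Rightarrow> real" where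
  "sigma_Nstar M X D Y0 Y1 zidx tidx = sig2 M (\<lambda>\<omega>. subvec zidx (X \<omega>)) Y1 Y0
     (\<lambda>\<omega>. psistar (condE M (\<lambda>\<omega>. subvec tidx (X \<omega>)) D \<omega>)
                  (condE M (\<lambda>\<omega>. subvec tidx (X \<omega>)) Y1 \<omega>)
                  (condE M (\<lambda>\<omega>. subvec tidx (X \<omega>)) Y0 \<omega>)
                  (D \<omega>) (Yobs D Y1 Y0 \<omega>))"

text \<open>|Z cap V^T X|: number of components of Z that are components of V^T X up to rotation,
  i.e. whose coordinate axis lies in the column space of V.\<close>
definition cnt_A :: "('l::finite \<Rightarrow> 'k::finite) \<Rightarrow> real^'r::finite^'k \<Rightarrow> nat" where
  "cnt_A zidx V = card {i. axis (zidx i) (1::real) \<in> range (\<lambda>c. V *v c)}"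

definition cnt_T :: "('l::finite \<Rightarrow> 'k) \<Rightarrow> ('kt::finite \<Rightarrow> 'k) \<Rightarrow> nat" where
  "cnt_T zidx tidx = card {i. zidx i \<in> range tidx}"

text \<open>Asymptotic variances (up to the common positive factor ||K||^2 / f(z)),
  as given in the paper's context.\<close>
definition avar_O where "avar_O M X D Y0 Y1 zidx = sigma_O M X D Y0 Y1 zidx"
definition avar_P where "avar_P M X D Y0 Y1 zidx = sigma_P M X D Y0 Y1 zidx"
definition avar_S :: "'a measure \<Rightarrow> ('a \<Rightarrow> real^'k) \<Rightarrow> ('a \<Rightarrow> real) \<Rightarrow> ('a \<Rightarrow> real) \<Rightarrow> ('a \<Rightarrow> real)
     \<Rightarrow> ('l::finite \<Rightarrow> 'k::finite) \<Rightarrow> real^'r::finite^'k \<Rightarrow> 'a \<Rightarrow> real" where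
  "avar_S M X D Y0 Y1 zidx V =
     (if cnt_A zidx V = CARD('l) then sigma_Sstar M X D Y0 Y1 zidx V else sigma_S M X D Y0 Y1 zidx V)"
definition avar_N :: "'a measure \<Rightarrow> ('a \<Rightarrow> real^'k) \<Rightarrow> ('a \<Rightarrow> real) \<Rightarrow> ('a \<Rightarrow> real) \<Rightarrow> ('a \<Rightarrow> real)
     \<Rightarrow> ('l::finite \<Rightarrow> 'k::finite) \<Rightarrow> ('kt::finite \<Rightarrow> 'k) \<Rightarrow> 'a \<Rightarrow> real" where
  "avar_N M X D Y0 Y1 zidx tidx =
     (if cnt_T zidx tidx = CARD('l) then sigma_Nstar M X D Y0 Y1 zidx tidx else sigma_N M X D Y0 Y1 zidx tidx)"

definition avar_le :: "'a measure \<Rightarrow> ('a \<Rightarrow> real) \<Rightarrow> ('a \<Rightarrow> real) \<Rightarrow> bool" where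
  "avar_le M a b \<longleftrightarrow> (AE \<omega> in M. a \<omega> \<le> b \<omega>)"
definition avar_eq :: "'a measure \<Rightarrow> ('a \<Rightarrow> real) \<Rightarrow> ('a \<Rightarrow> real) \<Rightarrow> bool" where
  "avar_eq M a b \<longleftrightarrow> (AE \<omega> in M. a \<omega> = b \<omega>)"

end

theory Submission imports Defs begin

section \<open>L2\<close>

definition L2 :: "'a measure \<Rightarrow> ('a \<Rightarrow> real) \<Rightarrow> bool" where
  "L2 M f \<longleftrightarrow> f \<in> borel_measurable M \<and> integrable M (\<lambda>x. (f x)\<^sup>2)"

lemma L2_meas: "L2 M f \<Longrightarrow> f \<in> borel_measurable M" by (simp add: L2_def)

lemma ineq1: "\<bar>y::real\<bar> \<le> \<bar>1 + y\<^sup>2\<bar>"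
proof -
  have "0 \<le> (\<bar>y\<bar> - 1)\<^sup>2" by simp
  then have "2*\<bar>y\<bar> \<le> 1 + y\<^sup>2" by (simp add: power2_eq_square algebra_simps abs_mult_self_eq)
  then show ?thesis by simp
qed
lemma ineq2: "\<bar>y * z\<bar> \<le> \<bar>y\<^sup>2 + z\<^sup>2::real\<bar>"
proof -
  have "0 \<le> (\<bar>y\<bar> - \<bar>z\<bar>)\<^sup>2" by simp
  then have "2*\<bar>y\<bar>*\<bar>z\<bar> \<le> y\<^sup>2 + z\<^sup>2" by (simp add: power2_eq_square algebra_simps abs_mult_self_eq)
  moreover have "0 \<le> \<bar>y\<bar>*\<bar>z\<bar>" by simp
  ultimately have "\<bar>y\<bar>*\<bar>z\<bar> \<le> y\<^sup>2 + z\<^sup>2" by linarith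
  then show ?thesis by (simp add: abs_mult)
qed
lemma ineq3: "\<bar>(y + z)\<^sup>2\<bar> \<le> \<bar>2 * y\<^sup>2 + 2 * z\<^sup>2::real\<bar>"
proof -
  have "0 \<le> (y - z)\<^sup>2" by simp
  then have "(y + z)\<^sup>2 \<le> 2 * y\<^sup>2 + 2 * z\<^sup>2" by (simp add: power2_eq_square algebra_simps)
  then show ?thesis by simp
qed

context prob_space
begin

lemma L2_integrable: assumes "L2 M f" shows "integrable M f"
proof -
  have [measurable]: "f \<in> borel_measurable M" using assms by (simp add: L2_def)
  have i: "integrable M (\<lambda>x. 1 + (f x)\<^sup>2)" using assms unfolding L2_def by (intro Bochner_Integration.integrable_add integrable_const) simp_all
  have "\<And>y::real. \<bar>y\<bar> \<le> \<bar>1 + y\<^sup>2\<bar>" by (rule ineq1)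
  then have "AE x in M. norm (f x) \<le> norm (1 + (f x)\<^sup>2)" by simp
  from Bochner_Integration.integrable_bound[OF i _ this] show ?thesis by simp
qed

lemma L2_mult: assumes "L2 M f" "L2 M g" shows "integrable M (\<lambda>x. f x * g x)"
proof -
  have [measurable]: "f \<in> borel_measurable M" "g \<in> borel_measurable M" using assms by (simp_all add: L2_def)
  have i: "integrable M (\<lambda>x. (f x)\<^sup>2 + (g x)\<^sup>2)" using assms unfolding L2_def by (intro Bochner_Integration.integrable_add) simp_all
  have "\<And>y z::real. \<bar>y * z\<bar> \<le> \<bar>y\<^sup>2 + z\<^sup>2\<bar>" by (rule ineq2)
  then have "AE x in M. norm (f x * g x) \<le> norm ((f x)\<^sup>2 + (g x)\<^sup>2)" by simp
  from Bochner_Integration.integrable_bound[OF i _ this] show ?thesis by simp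
qed

lemma L2_sq_int: "L2 M f \<Longrightarrow> integrable M (\<lambda>x. (f x)\<^sup>2)" by (simp add: L2_def)

lemma L2_add: assumes "L2 M f" "L2 M g" shows "L2 M (\<lambda>x. f x + g x)"
proof -
  have [measurable]: "f \<in> borel_measurable M" "g \<in> borel_measurable M" using assms by (simp_all add: L2_def)
  have i: "integrable M (\<lambda>x. 2 * (f x)\<^sup>2 + 2 * (g x)\<^sup>2)" using assms unfolding L2_def by (intro Bochner_Integration.integrable_add integrable_mult_right) simp_all
  have "\<And>y z::real. \<bar>(y + z)\<^sup>2\<bar> \<le> \<bar>2 * y\<^sup>2 + 2 * z\<^sup>2\<bar>" by (rule ineq3)
  then have "AE x in M. norm ((f x + g x)\<^sup>2) \<le> norm (2 * (f x)\<^sup>2 + 2 * (g x)\<^sup>2)" by simp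
  from Bochner_Integration.integrable_bound[OF i _ this] show ?thesis by (simp add: L2_def)
qed

lemma L2_cmult: assumes "L2 M f" shows "L2 M (\<lambda>x. c * f x)"
  using assms unfolding L2_def power_mult_distrib by (intro conjI integrable_mult_right borel_measurable_times borel_measurable_const) simp_all

lemma L2_uminus: assumes "L2 M f" shows "L2 M (\<lambda>x. - f x)"
  using L2_cmult[OF assms, of "-1"] by simp

lemma L2_diff: assumes "L2 M f" "L2 M g" shows "L2 M (\<lambda>x. f x - g x)"
  using L2_add[OF assms(1) L2_uminus[OF assms(2)]] by simp

lemma L2_bddmult: assumes "L2 M f" "g \<in> borel_measurable M" "AE x in M. \<bar>g x\<bar> \<le> K"
  shows "L2 M (\<lambda>x. f x * g x)" "L2 M (\<lambda>x. g x * f x)"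
proof -
  have [measurable]: "f \<in> borel_measurable M" "g \<in> borel_measurable M" using assms by (simp_all add: L2_def)
  have i: "integrable M (\<lambda>x. K\<^sup>2 * (f x)\<^sup>2)" using assms unfolding L2_def by (intro integrable_mult_right) simp_all
  have "AE x in M. norm ((f x * g x)\<^sup>2) \<le> norm (K\<^sup>2 * (f x)\<^sup>2)"
    using assms(3)
  proof eventually_elim
    case (elim x)
    have "\<bar>g x\<bar>\<^sup>2 \<le> K\<^sup>2" by (rule power_mono) (use elim in auto)
    then have "(g x)\<^sup>2 \<le> K\<^sup>2" by simp
    then have "(f x)\<^sup>2 * (g x)\<^sup>2 \<le> (f x)\<^sup>2 * K\<^sup>2" by (simp add: mult_left_mono)
    then show ?case by (simp add: power_mult_distrib mult.commute)
  qed
  from Bochner_Integration.integrable_bound[OF i _ this] show "L2 M (\<lambda>x. f x * g x)" by (simp add: L2_def)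
  then show "L2 M (\<lambda>x. g x * f x)" by (simp add: mult.commute)
qed

lemma L2_bdd: assumes "g \<in> borel_measurable M" "AE x in M. \<bar>g x\<bar> \<le> K"
  shows "L2 M g"
proof -
  have "L2 M (\<lambda>_. 1)" unfolding L2_def by simp
  from L2_bddmult(1)[OF this assms] show ?thesis by simp
qed

lemma L2_cong: assumes "L2 M f" "g \<in> borel_measurable M" "AE x in M. f x = g x" shows "L2 M g"
  unfolding L2_def
proof
  show "g \<in> borel_measurable M" by fact
  show "integrable M (\<lambda>x. (g x)\<^sup>2)"
  proof (rule integrable_cong_AE_imp[where g="\<lambda>x. (f x)\<^sup>2"])
    show "integrable M (\<lambda>x. (f x)\<^sup>2)" using assms by (simp add: L2_def)
    show "(\<lambda>x. (g x)\<^sup>2) \<in> borel_measurable M" using assms(2) by measurable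
    show "AE x in M. (f x)\<^sup>2 = (g x)\<^sup>2" using assms(3) by (rule eventually_mono) simp
  qed
qed

lemma L2_cond: assumes "sigma_finite_subalgebra M F" "L2 M f"
  shows "L2 M (real_cond_exp M F f)"
proof -
  interpret sigma_finite_subalgebra M F by fact
  have "integrable M (\<lambda>x. (real_cond_exp M F f x)\<^sup>2)"
    by (rule integrable_convex_cond_exp[where I=UNIV and q = power2])
       (use assms in \<open>simp_all add: L2_def L2_integrable convex_power2\<close>)
  then show ?thesis by (simp add: L2_def)
qed

end


section \<open>Sigma algebras\<close>

lemma subalg_vimage:
  assumes "W \<in> borel_measurable M"
  shows "subalgebra M (vimage_algebra (space M) W borel)"
  unfolding subalgebra_def
proof
  show "space (vimage_algebra (space M) W borel) = space M" by simp
  have "W \<in> space M \<rightarrow> space borel" using assms measurable_space by fastforce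
  then have "sets (vimage_algebra (space M) W borel) = {W -` A \<inter> space M | A. A \<in> sets borel}"
    by (rule sets_vimage_algebra2)
  then show "sets (vimage_algebra (space M) W borel) \<subseteq> sets M"
    using assms by (auto intro: measurable_sets)
qed

lemma sfs:
  assumes "prob_space M" "W \<in> borel_measurable M"
  shows "sigma_finite_subalgebra M (vimage_algebra (space M) W borel)"
proof (rule finite_measure_subalgebra_is_sigma_finite)
  interpret prob_space M by fact
  show "finite_measure_subalgebra M (vimage_algebra (space M) W borel)"
    by unfold_locales (rule subalg_vimage[OF assms(2)])
qed

lemma subalg_comp:
  assumes W: "W \<in> borel_measurable M" and phi: "\<phi> \<in> borel_measurable borel"
    and Z: "\<And>\<omega>. \<omega> \<in> space M \<Longrightarrow> Z \<omega> = \<phi> (W \<omega>)"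
    and Zm: "Z \<in> borel_measurable M"
  shows "subalgebra (vimage_algebra (space M) W borel) (vimage_algebra (space M) Z borel)"
  unfolding subalgebra_def
proof
  show "space (vimage_algebra (space M) Z borel) = space (vimage_algebra (space M) W borel)" by simp
  have "Z \<in> space M \<rightarrow> space borel" using Zm measurable_space by fastforce
  then have sZ: "sets (vimage_algebra (space M) Z borel) = {Z -` A \<inter> space M | A. A \<in> sets borel}"
    by (rule sets_vimage_algebra2)
  have "W \<in> space M \<rightarrow> space borel" using W measurable_space by fastforce
  then have sW: "sets (vimage_algebra (space M) W borel) = {W -` A \<inter> space M | A. A \<in> sets borel}"
    by (rule sets_vimage_algebra2)
  show "sets (vimage_algebra (space M) Z borel) \<subseteq> sets (vimage_algebra (space M) W borel)"
  proof
    fix S assume "S \<in> sets (vimage_algebra (space M) Z borel)"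
    then obtain B where B: "B \<in> sets borel" "S = Z -` B \<inter> space M" using sZ by auto
    have "\<phi> -` B \<in> sets borel" using measurable_sets[OF phi B(1)] by simp
    moreover have "S = W -` (\<phi> -` B) \<inter> space M" using B Z by auto
    ultimately show "S \<in> sets (vimage_algebra (space M) W borel)" using sW by auto
  qed
qed

lemma rce_eq:
  assumes "space F = space G" "sets F = sets G"
  shows "real_cond_exp M F f = real_cond_exp M G f"
  unfolding real_cond_exp_def nn_cond_exp_def restr_to_subalg_def subalgebra_def using assms by simp


section \<open>Conditional independence consequence\<close>

lemma (in prob_space) bdd_int: fixes f :: "'a \<Rightarrow> real" assumes "f \<in> borel_measurable M" "AE x in M. \<bar>f x\<bar> \<le> K" shows "integrable M f"
  using L2_integrable[OF L2_bdd[OF assms]] .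

lemma (in prob_space) int_bddmult:
  fixes f g :: "'a \<Rightarrow> real"
  assumes "integrable M f" "g \<in> borel_measurable M" "\<And>x. x \<in> space M \<Longrightarrow> \<bar>g x\<bar> \<le> K"
  shows "integrable M (\<lambda>x. g x * f x)"
proof -
  have i: "integrable M (\<lambda>x. \<bar>K\<bar> * f x)" using assms(1) by (rule integrable_mult_right)
  have "AE x in M. norm (g x * f x) \<le> norm (\<bar>K\<bar> * f x)"
  proof (rule AE_I2)
    fix x assume "x \<in> space M"
    then have "\<bar>g x\<bar> \<le> \<bar>K\<bar>" using assms(3) by fastforce
    then show "norm (g x * f x) \<le> norm (\<bar>K\<bar> * f x)" by (simp add: abs_mult mult_right_mono)
  qed
  from Bochner_Integration.integrable_bound[OF i _ this] show ?thesis
    using assms(1,2) by (simp add: borel_measurable_integrable)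
qed

lemma ci_key:
  fixes U :: "'a \<Rightarrow> real \<times> real" and X :: "'a \<Rightarrow> 'x::topological_space"
    and g :: "real \<times> real \<Rightarrow> real"
  assumes prob: "prob_space M" and Xm: "X \<in> borel_measurable M" and Dm[measurable]: "D \<in> borel_measurable M"
   and binD: "\<forall>\<omega>\<in>space M. D \<omega> = 0 \<or> D \<omega> = 1"
   and Um[measurable]: "U \<in> borel_measurable M"
   and ci: "cond_indep M U D X"
   and gm[measurable]: "g \<in> borel_measurable borel" and gi: "integrable M (\<lambda>\<omega>. g (U \<omega>))"
  defines "F \<equiv> vimage_algebra (space M) X borel"
  shows "AE \<omega> in M. real_cond_exp M F (\<lambda>\<omega>. D \<omega> * g (U \<omega>)) \<omega>
      = real_cond_exp M F D \<omega> * real_cond_exp M F (\<lambda>\<omega>. g (U \<omega>)) \<omega>"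
proof -
  interpret prob_space M by fact
  interpret S: sigma_finite_subalgebra M F unfolding F_def by (rule sfs[OF prob Xm])
  have subalg: "subalgebra M F" by (rule S.subalg)
  have FM: "\<And>f. f \<in> borel_measurable F \<Longrightarrow> f \<in> borel_measurable M"
    using measurable_from_subalg[OF subalg] by blast
  define p where "p = real_cond_exp M F D"
  define pc where "pc = (\<lambda>\<omega>. max 0 (min 1 (p \<omega>)))"
  have pF[measurable]: "p \<in> borel_measurable F" unfolding p_def by simp
  have pcF[measurable]: "pc \<in> borel_measurable F" unfolding pc_def by measurable
  have pcM[measurable]: "pc \<in> borel_measurable M" using FM[OF pcF] .
  have D01: "\<And>\<omega>. \<omega> \<in> space M \<Longrightarrow> 0 \<le> D \<omega> \<and> D \<omega> \<le> 1" using binD by auto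
  have Di: "integrable M D" by (rule bdd_int[of _ 1]) (use D01 in auto)
  have "AE \<omega> in M. p \<omega> \<ge> 0" unfolding p_def by (rule S.real_cond_exp_ge_c[OF Di]) (use D01 in auto)
  moreover have "AE \<omega> in M. p \<omega> \<le> 1" unfolding p_def by (rule S.real_cond_exp_le_c[OF Di]) (use D01 in auto)
  ultimately have pcp: "AE \<omega> in M. pc \<omega> = p \<omega>" unfolding pc_def by (auto elim: eventually_mono)
  have pc01: "\<And>\<omega>. 0 \<le> pc \<omega> \<and> pc \<omega> \<le> 1" unfolding pc_def by auto
  have w1: "\<And>S \<omega>. \<omega> \<in> space M \<Longrightarrow> \<bar>indicator S \<omega> * (D \<omega> - pc \<omega>)\<bar> \<le> (1::real)"
  proof -
    fix S \<omega> assume o: "\<omega> \<in> space M"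
    have "\<bar>D \<omega> - pc \<omega>\<bar> \<le> 1" using D01[OF o] pc01[of \<omega>] by auto
    then show "\<bar>indicator S \<omega> * (D \<omega> - pc \<omega>)\<bar> \<le> (1::real)"
      by (auto simp: indicator_def)
  qed
  have stepA: "(\<integral>\<omega>. indicator S \<omega> * (D \<omega> - pc \<omega>) * indicator B (U \<omega>) \<partial>M) = 0"
    if SF: "S \<in> sets F" and B: "B \<in> sets borel" for S B
  proof -
    have [measurable]: "S \<in> sets F" by fact
    have SM[measurable]: "S \<in> sets M" using SF subalg by (auto simp: subalgebra_def)
    have [measurable]: "B \<in> sets borel" by fact
    have [measurable]: "(indicator S :: 'a \<Rightarrow> real) \<in> borel_measurable F" by simp
    have "AE \<omega> in M. real_cond_exp M F (\<lambda>\<omega>. indicator B (U \<omega>) * indicator {1::real} (D \<omega>)) \<omega>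
        = real_cond_exp M F (\<lambda>\<omega>. indicator B (U \<omega>)) \<omega> * real_cond_exp M F (\<lambda>\<omega>. indicator {1::real} (D \<omega>)) \<omega>"
    proof -
      have ci': "\<And>B C. B \<in> sets borel \<Longrightarrow> C \<in> sets borel \<Longrightarrow> AE \<omega> in M. real_cond_exp M F (\<lambda>\<omega>. indicator B (U \<omega>) * indicator C (D \<omega>)) \<omega>
        = real_cond_exp M F (\<lambda>\<omega>. indicator B (U \<omega>)) \<omega> * real_cond_exp M F (\<lambda>\<omega>. indicator C (D \<omega>)) \<omega>"
        using ci unfolding cond_indep_def condE_def F_def by blast
      show ?thesis using ci'[OF B, of "{1}"] by simp
    qed
    moreover have "AE \<omega> in M. real_cond_exp M F (\<lambda>\<omega>. indicator B (U \<omega>) * indicator {1::real} (D \<omega>)) \<omega>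
        = real_cond_exp M F (\<lambda>\<omega>. indicator B (U \<omega>) * D \<omega>) \<omega>"
      by (rule S.real_cond_exp_cong) (use binD in \<open>auto simp: indicator_def\<close>)
    moreover have "AE \<omega> in M. real_cond_exp M F (\<lambda>\<omega>. indicator {1::real} (D \<omega>)) \<omega>
        = real_cond_exp M F D \<omega>"
      by (rule S.real_cond_exp_cong) (use binD in \<open>auto simp: indicator_def\<close>)
    ultimately have key: "AE \<omega> in M. real_cond_exp M F (\<lambda>\<omega>. indicator B (U \<omega>) * D \<omega>) \<omega>
        = real_cond_exp M F (\<lambda>\<omega>. indicator B (U \<omega>)) \<omega> * pc \<omega>"
      using pcp unfolding p_def by eventually_elim simp
    have i1: "integrable M (\<lambda>\<omega>. indicator S \<omega> * (indicator B (U \<omega>) * D \<omega>))"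
      by (rule bdd_int[of _ 1]) (use D01 in \<open>auto simp: indicator_def\<close>)
    have i2: "integrable M (\<lambda>\<omega>. (indicator S \<omega> * pc \<omega>) * indicator B (U \<omega>))"
      by (rule bdd_int[of _ 1]) (use pc01 in \<open>auto simp: indicator_def\<close>)
    have "(\<integral>\<omega>. indicator S \<omega> * (indicator B (U \<omega>) * D \<omega>) \<partial>M)
        = (\<integral>\<omega>. indicator S \<omega> * real_cond_exp M F (\<lambda>\<omega>. indicator B (U \<omega>) * D \<omega>) \<omega> \<partial>M)"
      by (rule S.real_cond_exp_intg(2)[symmetric]) (use i1 in auto)
    also have "\<dots> = (\<integral>\<omega>. (indicator S \<omega> * pc \<omega>) * real_cond_exp M F (\<lambda>\<omega>. indicator B (U \<omega>)) \<omega> \<partial>M)"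
      by (rule integral_cong_AE) (use key in \<open>auto elim: eventually_mono\<close>)
    also have "\<dots> = (\<integral>\<omega>. (indicator S \<omega> * pc \<omega>) * indicator B (U \<omega>) \<partial>M)"
      by (rule S.real_cond_exp_intg(2)) (use i2 in auto)
    finally have eq: "(\<integral>\<omega>. indicator S \<omega> * (indicator B (U \<omega>) * D \<omega>) \<partial>M)
       = (\<integral>\<omega>. (indicator S \<omega> * pc \<omega>) * indicator B (U \<omega>) \<partial>M)" .
    have "(\<integral>\<omega>. indicator S \<omega> * (D \<omega> - pc \<omega>) * indicator B (U \<omega>) \<partial>M)
        = (\<integral>\<omega>. indicator S \<omega> * (indicator B (U \<omega>) * D \<omega>) - (indicator S \<omega> * pc \<omega>) * indicator B (U \<omega>) \<partial>M)"
      by (rule Bochner_Integration.integral_cong) (auto simp: algebra_simps)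
    also have "\<dots> = 0" using eq by (simp add: Bochner_Integration.integral_diff[OF i1 i2])
    finally show ?thesis .
  qed
  define N where "N = distr M borel U"
  have stepB: "(\<integral>\<omega>. indicator S \<omega> * (D \<omega> - pc \<omega>) * h (U \<omega>) \<partial>M) = 0"
    if SF: "S \<in> sets F" and hN: "integrable N h" for S and h :: "real \<times> real \<Rightarrow> real"
    using hN
  proof (induct rule: integrable_induct)
    case (base A c)
    have "A \<in> sets borel" using base by (simp add: N_def)
    have "(\<integral>\<omega>. indicator S \<omega> * (D \<omega> - pc \<omega>) * (indicator A (U \<omega>) *\<^sub>R c) \<partial>M)
        = (\<integral>\<omega>. c * (indicator S \<omega> * (D \<omega> - pc \<omega>) * indicator A (U \<omega>)) \<partial>M)"
      by (rule Bochner_Integration.integral_cong) (auto simp: algebra_simps)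
    also have "\<dots> = c * (\<integral>\<omega>. indicator S \<omega> * (D \<omega> - pc \<omega>) * indicator A (U \<omega>) \<partial>M)" by simp
    also have "\<dots> = 0" using stepA[OF SF \<open>A \<in> sets borel\<close>] by simp
    finally show ?case .
  next
    case (add f g)
    have fm[measurable]: "f \<in> borel_measurable borel" "g \<in> borel_measurable borel"
      using add by (auto simp: N_def dest: borel_measurable_integrable)
    have SM[measurable]: "S \<in> sets M" using SF subalg by (auto simp: subalgebra_def)
    have fi: "integrable M (\<lambda>\<omega>. f (U \<omega>))" "integrable M (\<lambda>\<omega>. g (U \<omega>))"
      using add by (simp_all add: N_def integrable_distr_eq)
    have i1: "integrable M (\<lambda>\<omega>. indicator S \<omega> * (D \<omega> - pc \<omega>) * f (U \<omega>))"
      using int_bddmult[OF fi(1), of "\<lambda>\<omega>. indicator S \<omega> * (D \<omega> - pc \<omega>)" 1] w1 by simp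
    have i2: "integrable M (\<lambda>\<omega>. indicator S \<omega> * (D \<omega> - pc \<omega>) * g (U \<omega>))"
      using int_bddmult[OF fi(2), of "\<lambda>\<omega>. indicator S \<omega> * (D \<omega> - pc \<omega>)" 1] w1 by simp
    have "(\<integral>\<omega>. indicator S \<omega> * (D \<omega> - pc \<omega>) * (f (U \<omega>) + g (U \<omega>)) \<partial>M)
      = (\<integral>\<omega>. indicator S \<omega> * (D \<omega> - pc \<omega>) * f (U \<omega>) + indicator S \<omega> * (D \<omega> - pc \<omega>) * g (U \<omega>) \<partial>M)"
      by (rule Bochner_Integration.integral_cong) (auto simp: algebra_simps)
    also have "\<dots> = 0" using add by (simp add: Bochner_Integration.integral_add[OF i1 i2])
    finally show ?case .
  next
    case (lim f s)
    have SM[measurable]: "S \<in> sets M" using SF subalg by (auto simp: subalgebra_def)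
    have fm[measurable]: "f \<in> borel_measurable borel" using lim by (auto simp: N_def dest: borel_measurable_integrable)
    have sm[measurable]: "\<And>i. s i \<in> borel_measurable borel" using lim by (auto simp: N_def dest: borel_measurable_integrable)
    have fi: "integrable M (\<lambda>\<omega>. f (U \<omega>))" using lim by (simp add: N_def integrable_distr_eq)
    have "(\<lambda>i. \<integral>\<omega>. indicator S \<omega> * (D \<omega> - pc \<omega>) * s i (U \<omega>) \<partial>M)
        \<longlonglongrightarrow> (\<integral>\<omega>. indicator S \<omega> * (D \<omega> - pc \<omega>) * f (U \<omega>) \<partial>M)"
    proof (rule integral_dominated_convergence[where w = "\<lambda>\<omega>. 2 * \<bar>f (U \<omega>)\<bar>"])
      show "integrable M (\<lambda>\<omega>. 2 * \<bar>f (U \<omega>)\<bar>)" using fi by simp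
      show "AE \<omega> in M. (\<lambda>i. indicator S \<omega> * (D \<omega> - pc \<omega>) * s i (U \<omega>))
          \<longlonglongrightarrow> indicator S \<omega> * (D \<omega> - pc \<omega>) * f (U \<omega>)"
      proof (rule AE_I2)
        fix \<omega> assume "\<omega> \<in> space M"
        have "(\<lambda>i. s i (U \<omega>)) \<longlonglongrightarrow> f (U \<omega>)" using lim(3)[of "U \<omega>"] by (simp add: N_def)
        then show "(\<lambda>i. indicator S \<omega> * (D \<omega> - pc \<omega>) * s i (U \<omega>))
          \<longlonglongrightarrow> indicator S \<omega> * (D \<omega> - pc \<omega>) * f (U \<omega>)" by (intro tendsto_mult_left)
      qed
      show "AE \<omega> in M. norm (indicator S \<omega> * (D \<omega> - pc \<omega>) * s i (U \<omega>)) \<le> 2 * \<bar>f (U \<omega>)\<bar>" for i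
      proof (rule AE_I2)
        fix \<omega> assume \<omega>: "\<omega> \<in> space M"
        have a: "\<bar>s i (U \<omega>)\<bar> \<le> 2 * \<bar>f (U \<omega>)\<bar>" using lim(4)[of "U \<omega>" i] by (simp add: N_def)
        have "\<bar>indicator S \<omega> * (D \<omega> - pc \<omega>) * s i (U \<omega>)\<bar> \<le> 1 * \<bar>s i (U \<omega>)\<bar>"
          unfolding abs_mult[of _ "s i (U \<omega>)"] by (rule mult_right_mono) (use w1[OF \<omega>] in auto)
        then show "norm (indicator S \<omega> * (D \<omega> - pc \<omega>) * s i (U \<omega>)) \<le> 2 * \<bar>f (U \<omega>)\<bar>"
          using a by simp
      qed
    qed measurable
    moreover have "(\<lambda>i. \<integral>\<omega>. indicator S \<omega> * (D \<omega> - pc \<omega>) * s i (U \<omega>) \<partial>M) = (\<lambda>i. 0)"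
      using lim(2) by simp
    ultimately show ?case using LIMSEQ_unique tendsto_const by metis
  qed
  have giN: "integrable N g" using gi by (simp add: N_def integrable_distr_eq)
  have i3: "integrable M (\<lambda>\<omega>. (D \<omega> - pc \<omega>) * g (U \<omega>))"
    using int_bddmult[OF gi, of "\<lambda>\<omega>. D \<omega> - pc \<omega>" 1] w1[of _ UNIV] by simp
  have i4: "integrable M (\<lambda>\<omega>. pc \<omega> * g (U \<omega>))"
    using int_bddmult[OF gi, of "pc" 1] pc01 by simp
  have C0: "AE \<omega> in M. real_cond_exp M F (\<lambda>\<omega>. (D \<omega> - pc \<omega>) * g (U \<omega>)) \<omega> = 0"
  proof (rule S.real_cond_exp_charact)
    fix A assume A: "A \<in> sets F"
    have "(\<integral>\<omega>\<in>A. (D \<omega> - pc \<omega>) * g (U \<omega>) \<partial>M) = (\<integral>\<omega>. indicator A \<omega> * (D \<omega> - pc \<omega>) * g (U \<omega>) \<partial>M)"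
      unfolding set_lebesgue_integral_def by (simp add: mult.assoc)
    also have "\<dots> = 0" by (rule stepB[OF A giN])
    finally show "(\<integral>\<omega>\<in>A. (D \<omega> - pc \<omega>) * g (U \<omega>) \<partial>M) = (\<integral>\<omega>\<in>A. 0 \<partial>M)" by simp
  qed (use i3 in auto)
  have "AE \<omega> in M. real_cond_exp M F (\<lambda>\<omega>. D \<omega> * g (U \<omega>)) \<omega>
     = real_cond_exp M F (\<lambda>\<omega>. pc \<omega> * g (U \<omega>) + (D \<omega> - pc \<omega>) * g (U \<omega>)) \<omega>"
    by (rule S.real_cond_exp_cong) (auto simp: algebra_simps)
  moreover have "AE \<omega> in M. real_cond_exp M F (\<lambda>\<omega>. pc \<omega> * g (U \<omega>) + (D \<omega> - pc \<omega>) * g (U \<omega>)) \<omega>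
     = real_cond_exp M F (\<lambda>\<omega>. pc \<omega> * g (U \<omega>)) \<omega> + real_cond_exp M F (\<lambda>\<omega>. (D \<omega> - pc \<omega>) * g (U \<omega>)) \<omega>"
    by (rule S.real_cond_exp_add[OF i4 i3])
  moreover have "AE \<omega> in M. real_cond_exp M F (\<lambda>\<omega>. pc \<omega> * g (U \<omega>)) \<omega> = pc \<omega> * real_cond_exp M F (\<lambda>\<omega>. g (U \<omega>)) \<omega>"
    by (rule S.real_cond_exp_mult) (use i4 in auto)
  ultimately show ?thesis using C0 pcp unfolding p_def by eventually_elim simp
qed


section \<open>Core decomposition\<close>

lemma (in prob_space) L2_divq:
  fixes f q :: "'a \<Rightarrow> real"
  assumes f: "L2 M f" and qm: "q \<in> borel_measurable M" and c: "c > 0" and qc: "AE \<omega> in M. c < q \<omega> \<and> q \<omega> < 1 - c"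
  shows "L2 M (\<lambda>\<omega>. f \<omega> / q \<omega>)" "L2 M (\<lambda>\<omega>. f \<omega> / (1 - q \<omega>))"
proof -
  have fm[measurable]: "f \<in> borel_measurable M" using f by (simp add: L2_def)
  have [measurable]: "q \<in> borel_measurable M" by fact
  have b1: "AE \<omega> in M. \<bar>1 / q \<omega>\<bar> \<le> 1 / c"
    using qc by eventually_elim (use c in \<open>auto simp: divide_simps\<close>)
  have b2: "AE \<omega> in M. \<bar>1 / (1 - q \<omega>)\<bar> \<le> 1 / c"
    using qc by eventually_elim (use c in \<open>auto simp: divide_simps\<close>)
  have "L2 M (\<lambda>\<omega>. f \<omega> * (1 / q \<omega>))" by (rule L2_bddmult(1)[OF f _ b1]) measurable
  then show "L2 M (\<lambda>\<omega>. f \<omega> / q \<omega>)" by simp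
  have "L2 M (\<lambda>\<omega>. f \<omega> * (1 / (1 - q \<omega>)))" by (rule L2_bddmult(1)[OF f _ b2]) measurable
  then show "L2 M (\<lambda>\<omega>. f \<omega> / (1 - q \<omega>))" by simp
qed

lemma (in prob_space) L2_psistar:
  fixes D Y m1 m0 q :: "'a \<Rightarrow> real"
  assumes m1: "L2 M m1" and m0: "L2 M m0" and Y: "L2 M Y" and Dm: "D \<in> borel_measurable M"
    and Db: "AE \<omega> in M. \<bar>D \<omega>\<bar> \<le> 1"
    and qm: "q \<in> borel_measurable M" and c: "c > 0" and qc: "AE \<omega> in M. c < q \<omega> \<and> q \<omega> < 1 - c"
  shows "L2 M (\<lambda>\<omega>. psistar (q \<omega>) (m1 \<omega>) (m0 \<omega>) (D \<omega>) (Y \<omega>))"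
proof -
  have [measurable]: "D \<in> borel_measurable M" by fact
  have D1b: "AE \<omega> in M. \<bar>1 - D \<omega>\<bar> \<le> 2" using Db by eventually_elim auto
  have a: "L2 M (\<lambda>\<omega>. D \<omega> * (Y \<omega> - m1 \<omega>))"
    by (rule L2_bddmult(2)[OF L2_diff[OF Y m1] Dm Db])
  have b: "L2 M (\<lambda>\<omega>. (1 - D \<omega>) * (Y \<omega> - m0 \<omega>))"
    by (rule L2_bddmult(2)[OF L2_diff[OF Y m0] _ D1b]) measurable
  have "L2 M (\<lambda>\<omega>. D \<omega> * (Y \<omega> - m1 \<omega>) / q \<omega> - (1 - D \<omega>) * (Y \<omega> - m0 \<omega>) / (1 - q \<omega>) + m1 \<omega> - m0 \<omega>)"
    by (intro L2_diff L2_add L2_divq[OF _ qm c qc] a b m1 m0)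
  then show ?thesis by (simp add: psistar_def)
qed

lemma core:
  fixes D Y1 Y0 q a1 a0 tau :: "'a \<Rightarrow> real"
  assumes prob: "prob_space M"
   and sH: "sigma_finite_subalgebra M H" and sG: "sigma_finite_subalgebra M G" and HG: "subalgebra H G"
   and Dm[measurable]: "D \<in> borel_measurable M" and binD: "\<forall>\<omega>\<in>space M. D \<omega> = 0 \<or> D \<omega> = 1"
   and Y1: "L2 M Y1" and Y0: "L2 M Y0"
   and qH[measurable]: "q \<in> borel_measurable H" and c: "c > 0" and qc: "AE \<omega> in M. c < q \<omega> \<and> q \<omega> < 1 - c"
   and ED: "AE \<omega> in M. real_cond_exp M H D \<omega> = q \<omega>"
   and EDY1: "AE \<omega> in M. real_cond_exp M H (\<lambda>\<omega>. D \<omega> * Y1 \<omega>) \<omega> = q \<omega> * real_cond_exp M H Y1 \<omega>"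
   and EDY0: "AE \<omega> in M. real_cond_exp M H (\<lambda>\<omega>. D \<omega> * Y0 \<omega>) \<omega> = q \<omega> * real_cond_exp M H Y0 \<omega>"
   and a1H[measurable]: "a1 \<in> borel_measurable H" and a0H[measurable]: "a0 \<in> borel_measurable H"
   and a1: "L2 M a1" and a0: "L2 M a0"
   and tauG[measurable]: "tau \<in> borel_measurable G" and tau: "L2 M tau"
  shows "AE \<omega> in M. real_cond_exp M G (\<lambda>\<omega>. (psistar (q \<omega>) (a1 \<omega>) (a0 \<omega>) (D \<omega>) (Yobs D Y1 Y0 \<omega>) - tau \<omega>)\<^sup>2) \<omega>
     = real_cond_exp M G (\<lambda>\<omega>. (psistar (q \<omega>) (real_cond_exp M H Y1 \<omega>) (real_cond_exp M H Y0 \<omega>) (D \<omega>) (Yobs D Y1 Y0 \<omega>) - tau \<omega>)\<^sup>2) \<omega>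
     + real_cond_exp M G (\<lambda>\<omega>. q \<omega> * (1 - q \<omega>) * ((real_cond_exp M H Y1 \<omega> - a1 \<omega>) / q \<omega> + (real_cond_exp M H Y0 \<omega> - a0 \<omega>) / (1 - q \<omega>))\<^sup>2) \<omega>"
proof -
  interpret prob_space M by fact
  interpret H: sigma_finite_subalgebra M H by fact
  interpret G: sigma_finite_subalgebra M G by fact
  have subMH: "subalgebra M H" by (rule H.subalg)
  have subMG: "subalgebra M G" by (rule G.subalg)
  have HM: "\<And>f::'a\<Rightarrow>real. f \<in> borel_measurable H \<Longrightarrow> f \<in> borel_measurable M"
    using measurable_from_subalg[OF subMH] by blast
  have GM: "\<And>f::'a\<Rightarrow>real. f \<in> borel_measurable G \<Longrightarrow> f \<in> borel_measurable M"
    using measurable_from_subalg[OF subMG] by blast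
  have GH: "\<And>f::'a\<Rightarrow>real. f \<in> borel_measurable G \<Longrightarrow> f \<in> borel_measurable H"
    using measurable_from_subalg[OF HG] by blast
  have [measurable]: "Y1 \<in> borel_measurable M" "Y0 \<in> borel_measurable M" using Y1 Y0 by (simp_all add: L2_def)
  have [measurable]: "q \<in> borel_measurable M" "a1 \<in> borel_measurable M" "a0 \<in> borel_measurable M"
    using HM[OF qH] HM[OF a1H] HM[OF a0H] by auto
  have [measurable]: "tau \<in> borel_measurable M" "tau \<in> borel_measurable H" using GM[OF tauG] GH[OF tauG] by auto
  define b1 where "b1 = real_cond_exp M H Y1"
  define b0 where "b0 = real_cond_exp M H Y0"
  have [measurable]: "b1 \<in> borel_measurable H" "b0 \<in> borel_measurable H" unfolding b1_def b0_def by simp_all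
  have [measurable]: "b1 \<in> borel_measurable M" "b0 \<in> borel_measurable M" unfolding b1_def b0_def by simp_all
  have b1: "L2 M b1" and b0: "L2 M b0" unfolding b1_def b0_def using L2_cond[OF sH] Y1 Y0 by auto
  define Y where "Y = Yobs D Y1 Y0"
  have Yeq: "Y = (\<lambda>\<omega>. D \<omega> * Y1 \<omega> + (1 - D \<omega>) * Y0 \<omega>)" unfolding Y_def Yobs_def by auto
  have [measurable]: "Y \<in> borel_measurable M" unfolding Yeq by measurable
  have Db: "AE \<omega> in M. \<bar>D \<omega>\<bar> \<le> 1" using binD by (auto intro!: AE_I2)
  have D1b: "AE \<omega> in M. \<bar>1 - D \<omega>\<bar> \<le> 1" using binD by (auto intro!: AE_I2)
  have LD: "L2 M D" by (rule L2_bdd[OF Dm Db])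
  have LY: "L2 M Y" unfolding Yeq
    by (intro L2_add L2_bddmult(2)[OF Y1 Dm Db] L2_bddmult(2)[OF Y0 _ D1b]) measurable
  have qb: "AE \<omega> in M. 0 < q \<omega> \<and> q \<omega> < 1" using qc c by (auto elim: eventually_mono)
  have qabs: "AE \<omega> in M. \<bar>q \<omega>\<bar> \<le> 1" using qb by (auto elim: eventually_mono)
  have Lq: "L2 M q" by (rule L2_bdd[OF _ qabs]) measurable
  have Dqb: "AE \<omega> in M. \<bar>D \<omega> - q \<omega>\<bar> \<le> 1" using qb AE_space
  proof eventually_elim
    case (elim \<omega>)
    then have "D \<omega> = 0 \<or> D \<omega> = 1" using binD by auto
    then show ?case using elim by auto
  qed
  define psib where "psib = (\<lambda>\<omega>. psistar (q \<omega>) (b1 \<omega>) (b0 \<omega>) (D \<omega>) (Y \<omega>))"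
  define psia where "psia = (\<lambda>\<omega>. psistar (q \<omega>) (a1 \<omega>) (a0 \<omega>) (D \<omega>) (Y \<omega>))"
  have [measurable]: "psib \<in> borel_measurable M" "psia \<in> borel_measurable M"
    unfolding psib_def psia_def psistar_def by measurable
  have Lpsib: "L2 M psib" unfolding psib_def by (rule L2_psistar[OF b1 b0 LY Dm Db _ c qc]) measurable
  define h where "h = (\<lambda>\<omega>. (b1 \<omega> - a1 \<omega>) / q \<omega> + (b0 \<omega> - a0 \<omega>) / (1 - q \<omega>))"
  have [measurable]: "h \<in> borel_measurable H" "h \<in> borel_measurable M" unfolding h_def by measurable
  have Lh: "L2 M h" unfolding h_def
    by (intro L2_add L2_divq[OF _ _ c qc] L2_diff b1 b0 a1 a0) measurable
  define r where "r = (\<lambda>\<omega>. (D \<omega> - q \<omega>) * h \<omega>)"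
  have [measurable]: "r \<in> borel_measurable M" unfolding r_def by measurable
  have Lr: "L2 M r" unfolding r_def by (rule L2_bddmult(2)[OF Lh _ Dqb]) measurable
  have Ldiff: "L2 M (\<lambda>\<omega>. psib \<omega> - tau \<omega>)" by (rule L2_diff[OF Lpsib tau])
  have eq1: "AE \<omega> in M. psia \<omega> = psib \<omega> + r \<omega>"
    using qb
  proof eventually_elim
    case (elim \<omega>)
    then have "inverse (q \<omega>) * q \<omega> = 1" "inverse (1 - q \<omega>) * (1 - q \<omega>) = 1" by auto
    then show ?case unfolding psia_def psib_def r_def h_def psistar_def divide_inverse
      by algebra
  qed
  have iA: "integrable M (\<lambda>\<omega>. (psib \<omega> - tau \<omega>)\<^sup>2)" using Ldiff by (simp add: L2_def)
  have iB: "integrable M (\<lambda>\<omega>. (r \<omega>)\<^sup>2)" using Lr by (simp add: L2_def)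
  have iC: "integrable M (\<lambda>\<omega>. r \<omega> * (psib \<omega> - tau \<omega>))" by (rule L2_mult[OF Lr Ldiff])
  have s3a: "AE \<omega> in M. real_cond_exp M G (\<lambda>\<omega>. (psia \<omega> - tau \<omega>)\<^sup>2) \<omega>
      = real_cond_exp M G (\<lambda>\<omega>. ((psib \<omega> - tau \<omega>)\<^sup>2 + (r \<omega>)\<^sup>2) + 2 * (r \<omega> * (psib \<omega> - tau \<omega>))) \<omega>"
    by (rule G.real_cond_exp_cong) (use eq1 in \<open>auto elim!: eventually_mono simp: power2_eq_square algebra_simps\<close>)
  have s3b: "AE \<omega> in M. real_cond_exp M G (\<lambda>\<omega>. ((psib \<omega> - tau \<omega>)\<^sup>2 + (r \<omega>)\<^sup>2) + 2 * (r \<omega> * (psib \<omega> - tau \<omega>))) \<omega>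
      = real_cond_exp M G (\<lambda>\<omega>. (psib \<omega> - tau \<omega>)\<^sup>2 + (r \<omega>)\<^sup>2) \<omega> + real_cond_exp M G (\<lambda>\<omega>. 2 * (r \<omega> * (psib \<omega> - tau \<omega>))) \<omega>"
    by (rule G.real_cond_exp_add) (use iA iB iC in auto)
  have s3c: "AE \<omega> in M. real_cond_exp M G (\<lambda>\<omega>. (psib \<omega> - tau \<omega>)\<^sup>2 + (r \<omega>)\<^sup>2) \<omega>
      = real_cond_exp M G (\<lambda>\<omega>. (psib \<omega> - tau \<omega>)\<^sup>2) \<omega> + real_cond_exp M G (\<lambda>\<omega>. (r \<omega>)\<^sup>2) \<omega>"
    by (rule G.real_cond_exp_add[OF iA iB])
  have s3d: "AE \<omega> in M. real_cond_exp M G (\<lambda>\<omega>. 2 * (r \<omega> * (psib \<omega> - tau \<omega>))) \<omega>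
      = 2 * real_cond_exp M G (\<lambda>\<omega>. r \<omega> * (psib \<omega> - tau \<omega>)) \<omega>"
    by (rule G.real_cond_exp_cmult[OF iC])
  define k1 where "k1 = (\<lambda>\<omega>. (1 - q \<omega>) / q \<omega>)"
  define k0 where "k0 = (\<lambda>\<omega>. q \<omega> / (1 - q \<omega>))"
  define c2 where "c2 = (\<lambda>\<omega>. - (k1 \<omega> * b1 \<omega>) + k0 \<omega> * b0 \<omega> + (b1 \<omega> - b0 \<omega> - tau \<omega>))"
  define c5 where "c5 = (\<lambda>\<omega>. - (k0 \<omega> * b0 \<omega>) - (b1 \<omega> - b0 \<omega> - tau \<omega>) * q \<omega>)"
  have [measurable]: "k1 \<in> borel_measurable H" "k0 \<in> borel_measurable H" "c2 \<in> borel_measurable H" "c5 \<in> borel_measurable H"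
    unfolding k1_def k0_def c2_def c5_def by measurable
  have [measurable]: "k1 \<in> borel_measurable M" "k0 \<in> borel_measurable M" "c2 \<in> borel_measurable M" "c5 \<in> borel_measurable M"
    unfolding k1_def k0_def c2_def c5_def by measurable
  have k1b: "AE \<omega> in M. \<bar>k1 \<omega>\<bar> \<le> 1 / c" using qc
  proof eventually_elim
    case (elim \<omega>)
    then have a: "0 < q \<omega>" "0 < 1 - q \<omega>" "(1 - q \<omega>) / q \<omega> \<le> 1 / q \<omega>" "1 / q \<omega> \<le> 1 / c" using c by (auto simp: divide_simps)
    then have "\<bar>k1 \<omega>\<bar> = (1 - q \<omega>) / q \<omega>" unfolding k1_def by (simp add: abs_of_pos)
    then show ?case using a by linarith
  qed
  have k0b: "AE \<omega> in M. \<bar>k0 \<omega>\<bar> \<le> 1 / c" using qc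
  proof eventually_elim
    case (elim \<omega>)
    then have a: "0 < q \<omega>" "0 < 1 - q \<omega>" "q \<omega> / (1 - q \<omega>) \<le> 1 / (1 - q \<omega>)" "1 / (1 - q \<omega>) \<le> 1 / c" using c by (auto simp: divide_simps)
    then have "\<bar>k0 \<omega>\<bar> = q \<omega> / (1 - q \<omega>)" unfolding k0_def by (simp add: abs_of_pos)
    then show ?case using a by linarith
  qed
  have k0b': "AE \<omega> in M. \<bar>- k0 \<omega>\<bar> \<le> 1 / c" using k0b by simp
  have LDY1: "L2 M (\<lambda>\<omega>. D \<omega> * Y1 \<omega>)" by (rule L2_bddmult(2)[OF Y1 Dm Db])
  have LDY0: "L2 M (\<lambda>\<omega>. D \<omega> * Y0 \<omega>)" by (rule L2_bddmult(2)[OF Y0 Dm Db])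
  have Lkb1: "L2 M (\<lambda>\<omega>. k1 \<omega> * b1 \<omega>)" by (rule L2_bddmult(2)[OF b1 _ k1b]) measurable
  have Lkb0: "L2 M (\<lambda>\<omega>. k0 \<omega> * b0 \<omega>)" by (rule L2_bddmult(2)[OF b0 _ k0b]) measurable
  have Lbbt: "L2 M (\<lambda>\<omega>. b1 \<omega> - b0 \<omega> - tau \<omega>)" by (intro L2_diff b1 b0 tau)
  have Lc2: "L2 M c2" unfolding c2_def
    by (intro L2_add L2_uminus Lkb1 Lkb0 Lbbt)
  have Lbbtq: "L2 M (\<lambda>\<omega>. (b1 \<omega> - b0 \<omega> - tau \<omega>) * q \<omega>)" by (rule L2_bddmult(1)[OF Lbbt _ qabs]) measurable
  have Lc5: "L2 M c5" unfolding c5_def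
    by (intro L2_diff L2_uminus Lkb0 Lbbtq)
  have T1: "L2 M (\<lambda>\<omega>. k1 \<omega> * (D \<omega> * Y1 \<omega>))" by (rule L2_bddmult(2)[OF LDY1 _ k1b]) measurable
  have T2: "L2 M (\<lambda>\<omega>. c2 \<omega> * D \<omega>)" by (rule L2_bddmult(1)[OF Lc2 _ Db]) measurable
  have T3: "L2 M (\<lambda>\<omega>. k0 \<omega> * Y0 \<omega>)" by (rule L2_bddmult(2)[OF Y0 _ k0b]) measurable
  have T4: "L2 M (\<lambda>\<omega>. - k0 \<omega> * (D \<omega> * Y0 \<omega>))" by (rule L2_bddmult(2)[OF LDY0 _ k0b']) measurable
  have Z0a: "AE \<omega> in M. real_cond_exp M H (\<lambda>\<omega>. (D \<omega> - q \<omega>) * (psib \<omega> - tau \<omega>)) \<omega>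
     = real_cond_exp M H (\<lambda>\<omega>. (((k1 \<omega> * (D \<omega> * Y1 \<omega>) + c2 \<omega> * D \<omega>) + k0 \<omega> * Y0 \<omega>) + - k0 \<omega> * (D \<omega> * Y0 \<omega>)) + c5 \<omega>) \<omega>"
  proof (rule H.real_cond_exp_cong)
    show "AE \<omega> in M. (D \<omega> - q \<omega>) * (psib \<omega> - tau \<omega>)
       = (((k1 \<omega> * (D \<omega> * Y1 \<omega>) + c2 \<omega> * D \<omega>) + k0 \<omega> * Y0 \<omega>) + - k0 \<omega> * (D \<omega> * Y0 \<omega>)) + c5 \<omega>"
      using qb AE_space
    proof eventually_elim
      case (elim \<omega>)
      then have q0: "inverse (q \<omega>) * q \<omega> = 1" "inverse (1 - q \<omega>) * (1 - q \<omega>) = 1" by auto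
      have "D \<omega> = 0 \<or> D \<omega> = 1" using elim binD by auto
      with q0 show ?case
        unfolding psib_def psistar_def Yeq k1_def k0_def c2_def c5_def divide_inverse
        by (elim disjE) algebra+
    qed
  qed measurable
  have iS4: "integrable M (\<lambda>\<omega>. ((k1 \<omega> * (D \<omega> * Y1 \<omega>) + c2 \<omega> * D \<omega>) + k0 \<omega> * Y0 \<omega>) + - k0 \<omega> * (D \<omega> * Y0 \<omega>))"
    by (intro L2_integrable L2_add T1 T2 T3 T4)
  have iS3: "integrable M (\<lambda>\<omega>. (k1 \<omega> * (D \<omega> * Y1 \<omega>) + c2 \<omega> * D \<omega>) + k0 \<omega> * Y0 \<omega>)"
    by (intro L2_integrable L2_add T1 T2 T3)
  have iS2: "integrable M (\<lambda>\<omega>. k1 \<omega> * (D \<omega> * Y1 \<omega>) + c2 \<omega> * D \<omega>)"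
    by (intro L2_integrable L2_add T1 T2)
  have A1: "AE \<omega> in M. real_cond_exp M H (\<lambda>\<omega>. (((k1 \<omega> * (D \<omega> * Y1 \<omega>) + c2 \<omega> * D \<omega>) + k0 \<omega> * Y0 \<omega>) + - k0 \<omega> * (D \<omega> * Y0 \<omega>)) + c5 \<omega>) \<omega>
     = real_cond_exp M H (\<lambda>\<omega>. ((k1 \<omega> * (D \<omega> * Y1 \<omega>) + c2 \<omega> * D \<omega>) + k0 \<omega> * Y0 \<omega>) + - k0 \<omega> * (D \<omega> * Y0 \<omega>)) \<omega> + real_cond_exp M H c5 \<omega>"
    by (rule H.real_cond_exp_add[OF iS4 L2_integrable[OF Lc5]])
  have A2: "AE \<omega> in M. real_cond_exp M H (\<lambda>\<omega>. ((k1 \<omega> * (D \<omega> * Y1 \<omega>) + c2 \<omega> * D \<omega>) + k0 \<omega> * Y0 \<omega>) + - k0 \<omega> * (D \<omega> * Y0 \<omega>)) \<omega>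
     = real_cond_exp M H (\<lambda>\<omega>. (k1 \<omega> * (D \<omega> * Y1 \<omega>) + c2 \<omega> * D \<omega>) + k0 \<omega> * Y0 \<omega>) \<omega> + real_cond_exp M H (\<lambda>\<omega>. - k0 \<omega> * (D \<omega> * Y0 \<omega>)) \<omega>"
    by (rule H.real_cond_exp_add[OF iS3 L2_integrable[OF T4]])
  have A3: "AE \<omega> in M. real_cond_exp M H (\<lambda>\<omega>. (k1 \<omega> * (D \<omega> * Y1 \<omega>) + c2 \<omega> * D \<omega>) + k0 \<omega> * Y0 \<omega>) \<omega>
     = real_cond_exp M H (\<lambda>\<omega>. k1 \<omega> * (D \<omega> * Y1 \<omega>) + c2 \<omega> * D \<omega>) \<omega> + real_cond_exp M H (\<lambda>\<omega>. k0 \<omega> * Y0 \<omega>) \<omega>"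
    by (rule H.real_cond_exp_add[OF iS2 L2_integrable[OF T3]])
  have A4: "AE \<omega> in M. real_cond_exp M H (\<lambda>\<omega>. k1 \<omega> * (D \<omega> * Y1 \<omega>) + c2 \<omega> * D \<omega>) \<omega>
     = real_cond_exp M H (\<lambda>\<omega>. k1 \<omega> * (D \<omega> * Y1 \<omega>)) \<omega> + real_cond_exp M H (\<lambda>\<omega>. c2 \<omega> * D \<omega>) \<omega>"
    by (rule H.real_cond_exp_add[OF L2_integrable[OF T1] L2_integrable[OF T2]])
  have M1: "AE \<omega> in M. real_cond_exp M H (\<lambda>\<omega>. k1 \<omega> * (D \<omega> * Y1 \<omega>)) \<omega> = k1 \<omega> * real_cond_exp M H (\<lambda>\<omega>. D \<omega> * Y1 \<omega>) \<omega>"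
    by (rule H.real_cond_exp_mult) (use L2_integrable[OF T1] in auto)
  have M2: "AE \<omega> in M. real_cond_exp M H (\<lambda>\<omega>. c2 \<omega> * D \<omega>) \<omega> = c2 \<omega> * real_cond_exp M H D \<omega>"
    by (rule H.real_cond_exp_mult) (use L2_integrable[OF T2] in auto)
  have M3: "AE \<omega> in M. real_cond_exp M H (\<lambda>\<omega>. k0 \<omega> * Y0 \<omega>) \<omega> = k0 \<omega> * b0 \<omega>"
    unfolding b0_def by (rule H.real_cond_exp_mult) (use L2_integrable[OF T3] in auto)
  have M4: "AE \<omega> in M. real_cond_exp M H (\<lambda>\<omega>. - k0 \<omega> * (D \<omega> * Y0 \<omega>)) \<omega> = - k0 \<omega> * real_cond_exp M H (\<lambda>\<omega>. D \<omega> * Y0 \<omega>) \<omega>"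
    by (rule H.real_cond_exp_mult) (use L2_integrable[OF T4] in auto)
  have M5: "AE \<omega> in M. real_cond_exp M H c5 \<omega> = c5 \<omega>"
    by (rule H.real_cond_exp_F_meas) (use L2_integrable[OF Lc5] in auto)
  have Z0: "AE \<omega> in M. real_cond_exp M H (\<lambda>\<omega>. (D \<omega> - q \<omega>) * (psib \<omega> - tau \<omega>)) \<omega> = 0"
    using Z0a A1 A2 A3 A4 M1 M2 M3 M4 M5 ED EDY1 EDY0 qb
  proof eventually_elim
    case (elim \<omega>)
    then have q0: "inverse (q \<omega>) * q \<omega> = 1" "inverse (1 - q \<omega>) * (1 - q \<omega>) = 1" by auto
    have "k1 \<omega> * (q \<omega> * b1 \<omega>) + c2 \<omega> * q \<omega> + k0 \<omega> * b0 \<omega> + - k0 \<omega> * (q \<omega> * b0 \<omega>) + c5 \<omega> = 0"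
      unfolding k1_def k0_def c2_def c5_def divide_inverse by (simp add: algebra_simps)
    then show ?case using elim unfolding b1_def b0_def by simp
  qed
  have feq: "(\<lambda>\<omega>. r \<omega> * (psib \<omega> - tau \<omega>)) = (\<lambda>\<omega>. h \<omega> * ((D \<omega> - q \<omega>) * (psib \<omega> - tau \<omega>)))"
    by (auto simp: r_def)
  have X1: "AE \<omega> in M. real_cond_exp M H (\<lambda>\<omega>. h \<omega> * ((D \<omega> - q \<omega>) * (psib \<omega> - tau \<omega>))) \<omega>
      = h \<omega> * real_cond_exp M H (\<lambda>\<omega>. (D \<omega> - q \<omega>) * (psib \<omega> - tau \<omega>)) \<omega>"
    by (rule H.real_cond_exp_mult) (use iC feq in auto)
  have X2: "AE \<omega> in M. real_cond_exp M G (real_cond_exp M H (\<lambda>\<omega>. r \<omega> * (psib \<omega> - tau \<omega>))) \<omega>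
      = real_cond_exp M G (\<lambda>\<omega>. r \<omega> * (psib \<omega> - tau \<omega>)) \<omega>"
    by (rule G.real_cond_exp_nested_subalg[OF subMH HG iC])
  have X3: "AE \<omega> in M. real_cond_exp M G (real_cond_exp M H (\<lambda>\<omega>. r \<omega> * (psib \<omega> - tau \<omega>))) \<omega>
      = real_cond_exp M G (\<lambda>_. 0) \<omega>"
    by (rule G.real_cond_exp_cong) (use X1 Z0 feq in \<open>auto elim: eventually_elim2\<close>)
  have X4: "AE \<omega> in M. real_cond_exp M G (\<lambda>_. 0) \<omega> = 0"
    by (rule G.real_cond_exp_F_meas) auto
  have Cross0: "AE \<omega> in M. real_cond_exp M G (\<lambda>\<omega>. r \<omega> * (psib \<omega> - tau \<omega>)) \<omega> = 0"
    using X2 X3 X4 by eventually_elim simp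
  have iV1: "integrable M (\<lambda>\<omega>. (1 - 2 * q \<omega>) * D \<omega>)"
  proof (rule bdd_int[of _ 1])
    show "AE \<omega> in M. \<bar>(1 - 2 * q \<omega>) * D \<omega>\<bar> \<le> 1" using qb AE_space
    proof eventually_elim
      case (elim \<omega>)
      then have "D \<omega> = 0 \<or> D \<omega> = 1" using binD by auto
      then show ?case using elim by auto
    qed
  qed measurable
  have iV2: "integrable M (\<lambda>\<omega>. (q \<omega>)\<^sup>2)" using Lq by (simp add: L2_def)
  have V1: "AE \<omega> in M. real_cond_exp M H (\<lambda>\<omega>. (D \<omega> - q \<omega>)\<^sup>2) \<omega> = real_cond_exp M H (\<lambda>\<omega>. (1 - 2 * q \<omega>) * D \<omega> + (q \<omega>)\<^sup>2) \<omega>"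
  proof (rule H.real_cond_exp_cong)
    show "AE \<omega> in M. (D \<omega> - q \<omega>)\<^sup>2 = (1 - 2 * q \<omega>) * D \<omega> + (q \<omega>)\<^sup>2"
    proof (rule AE_I2)
      fix \<omega> assume "\<omega> \<in> space M"
      then have "D \<omega> = 0 \<or> D \<omega> = 1" using binD by auto
      then show "(D \<omega> - q \<omega>)\<^sup>2 = (1 - 2 * q \<omega>) * D \<omega> + (q \<omega>)\<^sup>2"
        by (elim disjE) (simp_all add: power2_eq_square algebra_simps)
    qed
  qed measurable
  have V2: "AE \<omega> in M. real_cond_exp M H (\<lambda>\<omega>. (1 - 2 * q \<omega>) * D \<omega> + (q \<omega>)\<^sup>2) \<omega>
     = real_cond_exp M H (\<lambda>\<omega>. (1 - 2 * q \<omega>) * D \<omega>) \<omega> + real_cond_exp M H (\<lambda>\<omega>. (q \<omega>)\<^sup>2) \<omega>"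
    by (rule H.real_cond_exp_add[OF iV1 iV2])
  have V3: "AE \<omega> in M. real_cond_exp M H (\<lambda>\<omega>. (1 - 2 * q \<omega>) * D \<omega>) \<omega> = (1 - 2 * q \<omega>) * real_cond_exp M H D \<omega>"
    by (rule H.real_cond_exp_mult) (use iV1 in auto)
  have V4: "AE \<omega> in M. real_cond_exp M H (\<lambda>\<omega>. (q \<omega>)\<^sup>2) \<omega> = (q \<omega>)\<^sup>2"
    by (rule H.real_cond_exp_F_meas) (use iV2 in auto)
  have EV: "AE \<omega> in M. real_cond_exp M H (\<lambda>\<omega>. (D \<omega> - q \<omega>)\<^sup>2) \<omega> = q \<omega> * (1 - q \<omega>)"
    using V1 V2 V3 V4 ED by eventually_elim (simp add: power2_eq_square algebra_simps)
  have req: "(\<lambda>\<omega>. (r \<omega>)\<^sup>2) = (\<lambda>\<omega>. (h \<omega>)\<^sup>2 * (D \<omega> - q \<omega>)\<^sup>2)"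
    by (auto simp: r_def power_mult_distrib)
  have W2: "AE \<omega> in M. real_cond_exp M H (\<lambda>\<omega>. (h \<omega>)\<^sup>2 * (D \<omega> - q \<omega>)\<^sup>2) \<omega> = (h \<omega>)\<^sup>2 * real_cond_exp M H (\<lambda>\<omega>. (D \<omega> - q \<omega>)\<^sup>2) \<omega>"
    by (rule H.real_cond_exp_mult) (use iB req in auto)
  have W3: "AE \<omega> in M. real_cond_exp M G (real_cond_exp M H (\<lambda>\<omega>. (r \<omega>)\<^sup>2)) \<omega> = real_cond_exp M G (\<lambda>\<omega>. (r \<omega>)\<^sup>2) \<omega>"
    by (rule G.real_cond_exp_nested_subalg[OF subMH HG iB])
  have W4: "AE \<omega> in M. real_cond_exp M G (real_cond_exp M H (\<lambda>\<omega>. (r \<omega>)\<^sup>2)) \<omega> = real_cond_exp M G (\<lambda>\<omega>. q \<omega> * (1 - q \<omega>) * (h \<omega>)\<^sup>2) \<omega>"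
  proof (rule G.real_cond_exp_cong)
    show "AE \<omega> in M. real_cond_exp M H (\<lambda>\<omega>. (r \<omega>)\<^sup>2) \<omega> = q \<omega> * (1 - q \<omega>) * (h \<omega>)\<^sup>2"
      using W2 EV unfolding req by eventually_elim simp
  qed measurable
  have Sq: "AE \<omega> in M. real_cond_exp M G (\<lambda>\<omega>. (r \<omega>)\<^sup>2) \<omega> = real_cond_exp M G (\<lambda>\<omega>. q \<omega> * (1 - q \<omega>) * (h \<omega>)\<^sup>2) \<omega>"
    using W3 W4 by eventually_elim simp
  have fin: "AE \<omega> in M. real_cond_exp M G (\<lambda>\<omega>. (psia \<omega> - tau \<omega>)\<^sup>2) \<omega>
     = real_cond_exp M G (\<lambda>\<omega>. (psib \<omega> - tau \<omega>)\<^sup>2) \<omega> + real_cond_exp M G (\<lambda>\<omega>. q \<omega> * (1 - q \<omega>) * (h \<omega>)\<^sup>2) \<omega>"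
    using s3a s3b s3c s3d Cross0 Sq by eventually_elim simp
  then show ?thesis unfolding psia_def psib_def h_def Y_def b1_def b0_def .
qed


lemma meas_lin:
  fixes X :: "'a \<Rightarrow> real^'k::finite" and V :: "real^'r::finite^'k"
  assumes "X \<in> borel_measurable M"
  shows "(\<lambda>\<omega>. transpose V *v X \<omega>) \<in> borel_measurable M"
proof -
  have "(\<lambda>x::real^'k. transpose V *v x) \<in> borel_measurable borel"
    by (intro borel_measurable_continuous_onI continuous_intros)
  from measurable_compose[OF assms this] show ?thesis .
qed

lemma meas_subvec:
  fixes X :: "'a \<Rightarrow> real^'k::finite" and idx :: "'l::finite \<Rightarrow> 'k"
  assumes "X \<in> borel_measurable M"
  shows "(\<lambda>\<omega>. subvec idx (X \<omega>)) \<in> borel_measurable M"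
proof -
  have "(\<lambda>x::real^'k. subvec idx x) \<in> borel_measurable borel"
    unfolding subvec_def by (intro borel_measurable_continuous_onI continuous_intros)
  from measurable_compose[OF assms this] show ?thesis .
qed

lemma inner_trans: "inner (V *v c) (x::real^'k::finite) = inner (c::real^'r::finite) (transpose V *v x)"
  by (metis dot_lmul_matrix vector_transpose_matrix)

theorem corollary1:
  fixes M :: "'a measure"
    and X :: "'a \<Rightarrow> real^'k::finite"
    and D Y0 Y1 :: "'a \<Rightarrow> real"
    and zidx :: "'l::finite \<Rightarrow> 'k"
    and tidx :: "'kt::finite \<Rightarrow> 'k"
    and V :: "real^'r::finite^'k"
    and c :: real
  assumes prob: "prob_space M"
    and meas: "X \<in> borel_measurable M" "D \<in> borel_measurable M"
              "Y0 \<in> borel_measurable M" "Y1 \<in> borel_measurable M"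
    and binD: "\<forall>\<omega>\<in>space M. D \<omega> = 0 \<or> D \<omega> = 1"
    and Zsub: "inj zidx"
    and Xtsub: "inj tidx"
    and Vorth: "transpose V ** V = mat 1"
    and C1_indep: "cond_indep M (\<lambda>\<omega>. (Y0 \<omega>, Y1 \<omega>)) D X"
    and C1_overlap: "c > 0" "AE \<omega> in M. c < condE M X D \<omega> \<and> condE M X D \<omega> < 1 - c"
    and C3_int: "integrable M (\<lambda>\<omega>. (Y0 \<omega>)\<^sup>2)" "integrable M (\<lambda>\<omega>. (Y1 \<omega>)\<^sup>2)"
    and C3_bdd: "\<exists>B. AE \<omega> in M. condE M X (\<lambda>\<omega>. (Y0 \<omega>)\<^sup>2) \<omega> \<le> B \<and> condE M X (\<lambda>\<omega>. (Y1 \<omega>)\<^sup>2) \<omega> \<le> B"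
    and p_eq_pt: "AE \<omega> in M. condE M X D \<omega> = condE M (\<lambda>\<omega>. subvec tidx (X \<omega>)) D \<omega>"
    and p_eq_q: "AE \<omega> in M. condE M X D \<omega> = condE M (\<lambda>\<omega>. transpose V *v X \<omega>) D \<omega>"
  shows
   \<comment> \<open>Case 1\<close>
   "(bij tidx \<and> cnt_A zidx V = CARD('l) \<longrightarrow>
      avar_le M (avar_N M X D Y0 Y1 zidx tidx) (avar_S M X D Y0 Y1 zidx V)
    \<and> avar_le M (avar_S M X D Y0 Y1 zidx V) (avar_P M X D Y0 Y1 zidx)
    \<and> avar_eq M (avar_P M X D Y0 Y1 zidx) (avar_O M X D Y0 Y1 zidx)
    \<and> (AE \<omega> in M. sigma_P M X D Y0 Y1 zidx \<omega> = sigma_Sstar M X D Y0 Y1 zidx V \<omega>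
         + condE M (\<lambda>\<omega>. subvec zidx (X \<omega>))
             (\<lambda>\<omega>. let q = condE M (\<lambda>\<omega>. transpose V *v X \<omega>) D \<omega>;
                      m1 = condE M (\<lambda>\<omega>. transpose V *v X \<omega>) Y1 \<omega>;
                      m0 = condE M (\<lambda>\<omega>. transpose V *v X \<omega>) Y0 \<omega>
                  in q * (1 - q) * (m1 / q + m0 / (1 - q))\<^sup>2) \<omega>)
    \<and> (AE \<omega> in M. sigma_Sstar M X D Y0 Y1 zidx V \<omega> = sigma_Nstar M X D Y0 Y1 zidx tidx \<omega>
         + condE M (\<lambda>\<omega>. subvec zidx (X \<omega>))
             (\<lambda>\<omega>. let q = condE M (\<lambda>\<omega>. transpose V *v X \<omega>) D \<omega>;
                      dm1 = condE M X Y1 \<omega> - condE M (\<lambda>\<omega>. transpose V *v X \<omega>) Y1 \<omega>;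
                      dm0 = condE M X Y0 \<omega> - condE M (\<lambda>\<omega>. transpose V *v X \<omega>) Y0 \<omega>
                  in q * (1 - q) * (dm1 / q + dm0 / (1 - q))\<^sup>2) \<omega>))
   \<and> \<comment> \<open>Case 2\<close>
    (bij tidx \<and> cnt_A zidx V < CARD('l) \<longrightarrow>
      avar_le M (avar_N M X D Y0 Y1 zidx tidx) (avar_S M X D Y0 Y1 zidx V)
    \<and> avar_eq M (avar_S M X D Y0 Y1 zidx V) (avar_P M X D Y0 Y1 zidx)
    \<and> avar_eq M (avar_P M X D Y0 Y1 zidx) (avar_O M X D Y0 Y1 zidx)
    \<and> (AE \<omega> in M. sigma_S M X D Y0 Y1 zidx V \<omega> = sigma_P M X D Y0 Y1 zidx \<omega>
                 \<and> sigma_P M X D Y0 Y1 zidx \<omega> = sigma_O M X D Y0 Y1 zidx \<omega>))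
   \<and> \<comment> \<open>Case 3\<close>
    (\<not> surj tidx \<and> cnt_T zidx tidx = cnt_A zidx V \<and> cnt_A zidx V < CARD('l) \<longrightarrow>
      avar_eq M (avar_N M X D Y0 Y1 zidx tidx) (avar_S M X D Y0 Y1 zidx V)
    \<and> avar_eq M (avar_S M X D Y0 Y1 zidx V) (avar_P M X D Y0 Y1 zidx)
    \<and> avar_eq M (avar_P M X D Y0 Y1 zidx) (avar_O M X D Y0 Y1 zidx)
    \<and> (AE \<omega> in M. sigma_N M X D Y0 Y1 zidx tidx \<omega> = sigma_S M X D Y0 Y1 zidx V \<omega>
                 \<and> sigma_S M X D Y0 Y1 zidx V \<omega> = sigma_P M X D Y0 Y1 zidx \<omega>
                 \<and> sigma_P M X D Y0 Y1 zidx \<omega> = sigma_O M X D Y0 Y1 zidx \<omega>))"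
proof -
  interpret prob_space M by (rule prob)
  let ?A = "\<lambda>\<omega>. transpose V *v X \<omega>"
  let ?Z = "\<lambda>\<omega>. subvec zidx (X \<omega>)"
  let ?T = "\<lambda>\<omega>. subvec tidx (X \<omega>)"
  let ?FX = "vimage_algebra (space M) X borel"
  let ?FA = "vimage_algebra (space M) ?A borel"
  let ?FZ = "vimage_algebra (space M) ?Z borel"
  let ?FT = "vimage_algebra (space M) ?T borel"
  let ?p = "real_cond_exp M ?FX D"
  let ?qa = "real_cond_exp M ?FA D"
  let ?pt = "real_cond_exp M ?FT D"
  let ?m1X = "real_cond_exp M ?FX Y1"
  let ?m0X = "real_cond_exp M ?FX Y0"
  let ?m1A = "real_cond_exp M ?FA Y1"
  let ?m0A = "real_cond_exp M ?FA Y0"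
  let ?tau = "real_cond_exp M ?FZ (\<lambda>\<omega>'. Y1 \<omega>' - Y0 \<omega>')"
  let ?Y = "Yobs D Y1 Y0"
  let ?E = "real_cond_exp M ?FZ"
  have Xm[measurable]: "X \<in> borel_measurable M" by (rule meas(1))
  have [measurable]: "D \<in> borel_measurable M" "Y0 \<in> borel_measurable M" "Y1 \<in> borel_measurable M"
    using meas by auto
  have Am[measurable]: "?A \<in> borel_measurable M" by (rule meas_lin[OF Xm])
  have Zm[measurable]: "?Z \<in> borel_measurable M" by (rule meas_subvec[OF Xm])
  have Tm[measurable]: "?T \<in> borel_measurable M" by (rule meas_subvec[OF Xm])
  have sX: "sigma_finite_subalgebra M ?FX" by (rule sfs[OF prob Xm])
  have sA: "sigma_finite_subalgebra M ?FA" by (rule sfs[OF prob Am])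
  have sZ: "sigma_finite_subalgebra M ?FZ" by (rule sfs[OF prob Zm])
  interpret SX: sigma_finite_subalgebra M ?FX by (rule sX)
  interpret SA: sigma_finite_subalgebra M ?FA by (rule sA)
  interpret SZ: sigma_finite_subalgebra M ?FZ by (rule sZ)
  have linm: "(\<lambda>x::real^'k. transpose V *v x) \<in> borel_measurable borel"
    by (intro borel_measurable_continuous_onI continuous_intros)
  have subXA: "subalgebra ?FX ?FA"
    by (rule subalg_comp[OF Xm linm _ Am]) simp
  have subXZ: "subalgebra ?FX ?FZ"
  proof (rule subalg_comp[OF Xm _ _ Zm, where \<phi> = "subvec zidx"])
    show "subvec zidx \<in> borel_measurable borel"
      unfolding subvec_def by (intro borel_measurable_continuous_onI continuous_intros)
  qed simp
  have subXT: "subalgebra ?FX ?FT"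
  proof (rule subalg_comp[OF Xm _ _ Tm, where \<phi> = "subvec tidx"])
    show "subvec tidx \<in> borel_measurable borel"
      unfolding subvec_def by (intro borel_measurable_continuous_onI continuous_intros)
  qed simp
  have subMX: "subalgebra M ?FX" by (rule SX.subalg)
  have XtoM: "\<And>f::'a\<Rightarrow>real. f \<in> borel_measurable ?FX \<Longrightarrow> f \<in> borel_measurable M"
    using measurable_from_subalg[OF subMX] by blast
  have AtoX: "\<And>f::'a\<Rightarrow>real. f \<in> borel_measurable ?FA \<Longrightarrow> f \<in> borel_measurable ?FX"
    using measurable_from_subalg[OF subXA] by blast
  have ZtoX: "\<And>f::'a\<Rightarrow>real. f \<in> borel_measurable ?FZ \<Longrightarrow> f \<in> borel_measurable ?FX"
    using measurable_from_subalg[OF subXZ] by blast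
  have LY1: "L2 M Y1" and LY0: "L2 M Y0" using C3_int by (auto simp: L2_def)
  have Ltau: "L2 M ?tau" by (rule L2_cond[OF sZ L2_diff[OF LY1 LY0]])
  have LmA: "L2 M ?m1A" "L2 M ?m0A" using L2_cond[OF sA] LY1 LY0 by auto
  have L0: "L2 M (\<lambda>_. 0)" by (rule L2_bdd[of _ 0]) auto
  have qap: "AE \<omega> in M. ?qa \<omega> = ?p \<omega>" using p_eq_q unfolding condE_def by (auto elim: eventually_mono)
  have ptp: "AE \<omega> in M. ?pt \<omega> = ?p \<omega>" using p_eq_pt unfolding condE_def by (auto elim: eventually_mono)
  have qac: "AE \<omega> in M. c < ?qa \<omega> \<and> ?qa \<omega> < 1 - c" using C1_overlap(2) qap unfolding condE_def
    by eventually_elim simp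
  have qab: "AE \<omega> in M. 0 < ?qa \<omega> \<and> ?qa \<omega> < 1" using qac C1_overlap(1) by (auto elim: eventually_mono)
  have qaX[measurable]: "?qa \<in> borel_measurable ?FX" by (rule AtoX) simp
  have mAX[measurable]: "?m1A \<in> borel_measurable ?FX" "?m0A \<in> borel_measurable ?FX" by (rule AtoX, simp)+
  have tauX[measurable]: "?tau \<in> borel_measurable ?FX" by (rule ZtoX) simp
  have U[measurable]: "(\<lambda>\<omega>. (Y0 \<omega>, Y1 \<omega>)) \<in> borel_measurable M" by (intro borel_measurable_Pair) simp_all
  have sndm: "(\<lambda>x::real\<times>real. snd x) \<in> borel_measurable borel"
    by (intro borel_measurable_continuous_onI continuous_on_snd continuous_on_id)
  have fstm: "(\<lambda>x::real\<times>real. fst x) \<in> borel_measurable borel"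
    by (intro borel_measurable_continuous_onI continuous_on_fst continuous_on_id)
  have ck1: "AE \<omega> in M. real_cond_exp M ?FX (\<lambda>\<omega>. D \<omega> * Y1 \<omega>) \<omega> = ?qa \<omega> * ?m1X \<omega>"
  proof -
    have "AE \<omega> in M. real_cond_exp M ?FX (\<lambda>\<omega>. D \<omega> * snd (Y0 \<omega>, Y1 \<omega>)) \<omega>
      = ?p \<omega> * real_cond_exp M ?FX (\<lambda>\<omega>. snd (Y0 \<omega>, Y1 \<omega>)) \<omega>"
      by (rule ci_key[OF prob Xm _ binD U C1_indep]) (use L2_integrable[OF LY1] sndm in simp_all)
    then show ?thesis using qap by eventually_elim simp
  qed
  have ck0: "AE \<omega> in M. real_cond_exp M ?FX (\<lambda>\<omega>. D \<omega> * Y0 \<omega>) \<omega> = ?qa \<omega> * ?m0X \<omega>"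
  proof -
    have "AE \<omega> in M. real_cond_exp M ?FX (\<lambda>\<omega>. D \<omega> * fst (Y0 \<omega>, Y1 \<omega>)) \<omega>
      = ?p \<omega> * real_cond_exp M ?FX (\<lambda>\<omega>. fst (Y0 \<omega>, Y1 \<omega>)) \<omega>"
      by (rule ci_key[OF prob Xm _ binD U C1_indep]) (use L2_integrable[OF LY0] fstm in simp_all)
    then show ?thesis using qap by eventually_elim simp
  qed
  have EDX: "AE \<omega> in M. real_cond_exp M ?FX D \<omega> = ?qa \<omega>" using qap by (auto elim: eventually_mono)
  have tauZ[measurable]: "?tau \<in> borel_measurable ?FZ" by simp
  have z0: "(\<lambda>_. 0::real) \<in> borel_measurable ?FX" by simp
  have Dm: "D \<in> borel_measurable M" using meas by auto
  have R1: "AE \<omega> in M. ?E (\<lambda>\<omega>. (psistar (?qa \<omega>) 0 0 (D \<omega>) (?Y \<omega>) - ?tau \<omega>)\<^sup>2) \<omega>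
     = ?E (\<lambda>\<omega>. (psistar (?qa \<omega>) (?m1X \<omega>) (?m0X \<omega>) (D \<omega>) (?Y \<omega>) - ?tau \<omega>)\<^sup>2) \<omega>
     + ?E (\<lambda>\<omega>. ?qa \<omega> * (1 - ?qa \<omega>) * ((?m1X \<omega> - 0) / ?qa \<omega> + (?m0X \<omega> - 0) / (1 - ?qa \<omega>))\<^sup>2) \<omega>"
    by (rule core[OF prob sX sZ subXZ Dm binD LY1 LY0 qaX C1_overlap(1) qac EDX ck1 ck0 z0 z0 L0 L0 tauZ Ltau])
  have R2: "AE \<omega> in M. ?E (\<lambda>\<omega>. (psistar (?qa \<omega>) (?m1A \<omega>) (?m0A \<omega>) (D \<omega>) (?Y \<omega>) - ?tau \<omega>)\<^sup>2) \<omega>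
     = ?E (\<lambda>\<omega>. (psistar (?qa \<omega>) (?m1X \<omega>) (?m0X \<omega>) (D \<omega>) (?Y \<omega>) - ?tau \<omega>)\<^sup>2) \<omega>
     + ?E (\<lambda>\<omega>. ?qa \<omega> * (1 - ?qa \<omega>) * ((?m1X \<omega> - ?m1A \<omega>) / ?qa \<omega> + (?m0X \<omega> - ?m0A \<omega>) / (1 - ?qa \<omega>))\<^sup>2) \<omega>"
    by (rule core[OF prob sX sZ subXZ Dm binD LY1 LY0 qaX C1_overlap(1) qac EDX ck1 ck0 mAX LmA tauZ Ltau])
  have Lqa: "L2 M ?qa"
  proof (rule L2_bdd[of _ 1])
    show "AE \<omega> in M. \<bar>?qa \<omega>\<bar> \<le> 1" using qab by eventually_elim auto
  qed simp
  have ckA: "AE \<omega> in M. real_cond_exp M ?FA (\<lambda>\<omega>. D \<omega> * Yj \<omega>) \<omega> = ?qa \<omega> * real_cond_exp M ?FA Yj \<omega>"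
    if LYj: "L2 M Yj" and ckj: "AE \<omega> in M. real_cond_exp M ?FX (\<lambda>\<omega>. D \<omega> * Yj \<omega>) \<omega> = ?qa \<omega> * real_cond_exp M ?FX Yj \<omega>"
    for Yj
  proof -
    have [measurable]: "Yj \<in> borel_measurable M" using LYj by (simp add: L2_def)
    have LDY: "L2 M (\<lambda>\<omega>. D \<omega> * Yj \<omega>)"
      by (rule L2_bddmult(2)[OF LYj Dm, of 1]) (use binD in \<open>auto intro!: AE_I2\<close>)
    have e1: "AE \<omega> in M. real_cond_exp M ?FA (real_cond_exp M ?FX (\<lambda>\<omega>. D \<omega> * Yj \<omega>)) \<omega> = real_cond_exp M ?FA (\<lambda>\<omega>. D \<omega> * Yj \<omega>) \<omega>"
      by (rule SA.real_cond_exp_nested_subalg[OF subMX subXA L2_integrable[OF LDY]])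
    have e2: "AE \<omega> in M. real_cond_exp M ?FA (real_cond_exp M ?FX (\<lambda>\<omega>. D \<omega> * Yj \<omega>)) \<omega> = real_cond_exp M ?FA (\<lambda>\<omega>. ?qa \<omega> * real_cond_exp M ?FX Yj \<omega>) \<omega>"
      by (rule SA.real_cond_exp_cong[OF ckj]) simp_all
    have e3: "AE \<omega> in M. real_cond_exp M ?FA (\<lambda>\<omega>. ?qa \<omega> * real_cond_exp M ?FX Yj \<omega>) \<omega> = ?qa \<omega> * real_cond_exp M ?FA (real_cond_exp M ?FX Yj) \<omega>"
      by (rule SA.real_cond_exp_mult) (use L2_mult[OF Lqa L2_cond[OF sX LYj]] in simp_all)
    have e4: "AE \<omega> in M. real_cond_exp M ?FA (real_cond_exp M ?FX Yj) \<omega> = real_cond_exp M ?FA Yj \<omega>"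
      by (rule SA.real_cond_exp_nested_subalg[OF subMX subXA L2_integrable[OF LYj]])
    show ?thesis using e1 e2 e3 e4 by eventually_elim simp
  qed
  have EDA: "AE \<omega> in M. real_cond_exp M ?FA D \<omega> = ?qa \<omega>" by simp
  have R3: "AE \<omega> in M. ?E (\<lambda>\<omega>. (psistar (?qa \<omega>) 0 0 (D \<omega>) (?Y \<omega>) - ?tau \<omega>)\<^sup>2) \<omega>
     = ?E (\<lambda>\<omega>. (psistar (?qa \<omega>) (?m1A \<omega>) (?m0A \<omega>) (D \<omega>) (?Y \<omega>) - ?tau \<omega>)\<^sup>2) \<omega>
     + ?E (\<lambda>\<omega>. ?qa \<omega> * (1 - ?qa \<omega>) * ((?m1A \<omega> - 0) / ?qa \<omega> + (?m0A \<omega> - 0) / (1 - ?qa \<omega>))\<^sup>2) \<omega>"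
    if subAZ: "subalgebra ?FA ?FZ"
  proof -
    have tauA: "?tau \<in> borel_measurable ?FA" by (rule measurable_from_subalg[OF subAZ]) simp
    show ?thesis
      apply (rule core[OF prob sA sZ subAZ Dm binD LY1 LY0])
                 apply simp
                apply (rule C1_overlap(1))
               apply (rule qac)
              apply (rule EDA)
             apply (rule ckA[OF LY1 ck1])
            apply (rule ckA[OF LY0 ck0])
           apply simp
          apply simp
         apply (rule L0)
        apply (rule L0)
       apply simp
      apply (rule Ltau)
      done
  qed
  have N1: "AE \<omega> in M. 0 \<le> ?E (\<lambda>\<omega>. ?qa \<omega> * (1 - ?qa \<omega>) * ((?m1X \<omega> - 0) / ?qa \<omega> + (?m0X \<omega> - 0) / (1 - ?qa \<omega>))\<^sup>2) \<omega>" (is "AE \<omega> in M. 0 \<le> ?E (\<lambda>\<omega>. ?qa \<omega> * (1 - ?qa \<omega>) * (?h \<omega>)\<^sup>2) \<omega>")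
  proof (rule SZ.real_cond_exp_pos)
    show "AE \<omega> in M. 0 \<le> ?qa \<omega> * (1 - ?qa \<omega>) * (?h \<omega>)\<^sup>2" using qab by eventually_elim simp
  qed measurable
  have N2: "AE \<omega> in M. 0 \<le> ?E (\<lambda>\<omega>. ?qa \<omega> * (1 - ?qa \<omega>) * ((?m1X \<omega> - ?m1A \<omega>) / ?qa \<omega> + (?m0X \<omega> - ?m0A \<omega>) / (1 - ?qa \<omega>))\<^sup>2) \<omega>" (is "AE \<omega> in M. 0 \<le> ?E (\<lambda>\<omega>. ?qa \<omega> * (1 - ?qa \<omega>) * (?h \<omega>)\<^sup>2) \<omega>")
  proof (rule SZ.real_cond_exp_pos)
    show "AE \<omega> in M. 0 \<le> ?qa \<omega> * (1 - ?qa \<omega>) * (?h \<omega>)\<^sup>2" using qab by eventually_elim simp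
  qed measurable
  have N3: "AE \<omega> in M. 0 \<le> ?E (\<lambda>\<omega>. ?qa \<omega> * (1 - ?qa \<omega>) * ((?m1A \<omega> - 0) / ?qa \<omega> + (?m0A \<omega> - 0) / (1 - ?qa \<omega>))\<^sup>2) \<omega>" (is "AE \<omega> in M. 0 \<le> ?E (\<lambda>\<omega>. ?qa \<omega> * (1 - ?qa \<omega>) * (?h \<omega>)\<^sup>2) \<omega>")
  proof (rule SZ.real_cond_exp_pos)
    show "AE \<omega> in M. 0 \<le> ?qa \<omega> * (1 - ?qa \<omega>) * (?h \<omega>)\<^sup>2" using qab by eventually_elim simp
  qed measurable
  have EO: "AE \<omega> in M. sigma_O M X D Y0 Y1 zidx \<omega> = ?E (\<lambda>\<omega>. (psistar (?qa \<omega>) 0 0 (D \<omega>) (?Y \<omega>) - ?tau \<omega>)\<^sup>2) \<omega>"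
    unfolding sigma_O_def sig2_def condE_def
  proof (rule SZ.real_cond_exp_cong)
    show "AE \<omega> in M. (psi (?p \<omega>) (D \<omega>) (?Y \<omega>) - ?tau \<omega>)\<^sup>2 = (psistar (?qa \<omega>) 0 0 (D \<omega>) (?Y \<omega>) - ?tau \<omega>)\<^sup>2"
      using qap by eventually_elim (simp add: psi_def psistar_def)
  qed (unfold psi_def psistar_def Yobs_def, measurable)
  have ES: "AE \<omega> in M. sigma_S M X D Y0 Y1 zidx V \<omega> = ?E (\<lambda>\<omega>. (psistar (?qa \<omega>) 0 0 (D \<omega>) (?Y \<omega>) - ?tau \<omega>)\<^sup>2) \<omega>"
    unfolding sigma_S_def sig2_def condE_def
  proof (rule SZ.real_cond_exp_cong)
    show "AE \<omega> in M. (psi (?qa \<omega>) (D \<omega>) (?Y \<omega>) - ?tau \<omega>)\<^sup>2 = (psistar (?qa \<omega>) 0 0 (D \<omega>) (?Y \<omega>) - ?tau \<omega>)\<^sup>2"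
      by (simp add: psi_def psistar_def)
  qed (unfold psi_def psistar_def Yobs_def, measurable)
  have EN: "AE \<omega> in M. sigma_N M X D Y0 Y1 zidx tidx \<omega> = ?E (\<lambda>\<omega>. (psistar (?qa \<omega>) 0 0 (D \<omega>) (?Y \<omega>) - ?tau \<omega>)\<^sup>2) \<omega>"
    unfolding sigma_N_def sig2_def condE_def
  proof (rule SZ.real_cond_exp_cong)
    show "AE \<omega> in M. (psi (?pt \<omega>) (D \<omega>) (?Y \<omega>) - ?tau \<omega>)\<^sup>2 = (psistar (?qa \<omega>) 0 0 (D \<omega>) (?Y \<omega>) - ?tau \<omega>)\<^sup>2"
      using qap ptp by eventually_elim (simp add: psi_def psistar_def)
  qed (unfold psi_def psistar_def Yobs_def, measurable)
  have ESs: "sigma_Sstar M X D Y0 Y1 zidx V = ?E (\<lambda>\<omega>. (psistar (?qa \<omega>) (?m1A \<omega>) (?m0A \<omega>) (D \<omega>) (?Y \<omega>) - ?tau \<omega>)\<^sup>2)"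
    unfolding sigma_Sstar_def sig2_def condE_def ..
  have ENs: "AE \<omega> in M. sigma_Nstar M X D Y0 Y1 zidx tidx \<omega> = ?E (\<lambda>\<omega>. (psistar (?qa \<omega>) (?m1X \<omega>) (?m0X \<omega>) (D \<omega>) (?Y \<omega>) - ?tau \<omega>)\<^sup>2) \<omega>"
    if bij: "bij tidx"
  proof -
    have phim: "(\<lambda>y::real^'kt. \<chi> k. y $ inv tidx k) \<in> borel_measurable borel"
      by (intro borel_measurable_continuous_onI continuous_intros)
    have subTX: "subalgebra ?FT ?FX"
    proof (rule subalg_comp[OF Tm phim _ Xm])
      fix \<omega> show "X \<omega> = (\<chi> k. subvec tidx (X \<omega>) $ inv tidx k)"
        using bij by (simp add: vec_eq_iff subvec_def bij_is_surj surj_f_inv_f)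
    qed
    have "sets ?FT = sets ?FX" using subTX subXT by (auto simp: subalgebra_def)
    then have rT: "\<And>f. real_cond_exp M ?FT f = real_cond_exp M ?FX f" by (intro rce_eq) simp_all
    show ?thesis
      unfolding sigma_Nstar_def sig2_def condE_def rT
    proof (rule SZ.real_cond_exp_cong)
      show "AE \<omega> in M. (psistar (?p \<omega>) (?m1X \<omega>) (?m0X \<omega>) (D \<omega>) (?Y \<omega>) - ?tau \<omega>)\<^sup>2
          = (psistar (?qa \<omega>) (?m1X \<omega>) (?m0X \<omega>) (D \<omega>) (?Y \<omega>) - ?tau \<omega>)\<^sup>2"
        using qap by eventually_elim simp
    qed (unfold psi_def psistar_def Yobs_def, measurable)
  qed
  have cntT: "cnt_T zidx tidx = CARD('l)" if "bij tidx"
  proof -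
    have "{i. zidx i \<in> range tidx} = UNIV" using that by (auto simp: bij_is_surj)
    then show ?thesis unfolding cnt_T_def by simp
  qed
  have subAZ: "subalgebra ?FA ?FZ" if h: "cnt_A zidx V = CARD('l)"
  proof -
    have S: "{i. axis (zidx i) (1::real) \<in> range (\<lambda>c. V *v c)} = UNIV"
      by (rule card_subset_eq) (use h in \<open>auto simp: cnt_A_def\<close>)
    then have "\<forall>i. \<exists>c. axis (zidx i) (1::real) = V *v c" by blast
    then obtain cf where cf: "\<And>i. axis (zidx i) (1::real) = V *v cf i" by metis
    have phim: "(\<lambda>y::real^'r. \<chi> i::'l. inner (cf i) y) \<in> borel_measurable borel"
      by (intro borel_measurable_continuous_onI continuous_intros)
    show ?thesis
    proof (rule subalg_comp[OF Am phim _ Zm])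
      fix \<omega>
      show "subvec zidx (X \<omega>) = (\<chi> i. inner (cf i) (transpose V *v X \<omega>))"
      proof (subst vec_eq_iff, intro allI)
        fix i
        have "subvec zidx (X \<omega>) $ i = inner (X \<omega>) (axis (zidx i) 1)"
          unfolding subvec_def vec_lambda_beta by (rule cart_eq_inner_axis)
        also have "\<dots> = inner (V *v cf i) (X \<omega>)" by (simp add: cf inner_commute)
        also have "\<dots> = inner (cf i) (transpose V *v X \<omega>)" by (rule inner_trans)
        finally show "subvec zidx (X \<omega>) $ i = (\<chi> i. inner (cf i) (transpose V *v X \<omega>)) $ i" by simp
      qed
    qed
  qed
  have avN1: "avar_N M X D Y0 Y1 zidx tidx = sigma_Nstar M X D Y0 Y1 zidx tidx" if "bij tidx"
    unfolding avar_N_def using cntT[OF that] by simp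
  have avN3: "avar_N M X D Y0 Y1 zidx tidx = sigma_N M X D Y0 Y1 zidx tidx" if "cnt_T zidx tidx \<noteq> CARD('l)"
    unfolding avar_N_def using that by simp
  have avS1: "avar_S M X D Y0 Y1 zidx V = sigma_Sstar M X D Y0 Y1 zidx V" if "cnt_A zidx V = CARD('l)"
    unfolding avar_S_def using that by simp
  have avS2: "avar_S M X D Y0 Y1 zidx V = sigma_S M X D Y0 Y1 zidx V" if "cnt_A zidx V \<noteq> CARD('l)"
    unfolding avar_S_def using that by simp
  have avP: "avar_P M X D Y0 Y1 zidx = sigma_O M X D Y0 Y1 zidx" unfolding avar_P_def sigma_P_def ..
  have avO: "avar_O M X D Y0 Y1 zidx = sigma_O M X D Y0 Y1 zidx" unfolding avar_O_def ..
  show ?thesis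
    apply (intro conjI impI)
    subgoal premises h
    proof -
      have b: "bij tidx" and a: "cnt_A zidx V = CARD('l)" using h by auto
      show ?thesis unfolding avar_le_def avN1[OF b] avS1[OF a] ESs
        using ENs[OF b] R2 N2 by eventually_elim linarith
    qed
    subgoal premises h
    proof -
      have a: "cnt_A zidx V = CARD('l)" using h by auto
      show ?thesis unfolding avar_le_def avS1[OF a] avP ESs
        using EO R3[OF subAZ[OF a]] N3 by eventually_elim linarith
    qed
    subgoal unfolding avar_eq_def avP avO by simp
    subgoal premises h
    proof -
      have a: "cnt_A zidx V = CARD('l)" using h by auto
      show ?thesis unfolding sigma_P_def condE_def Let_def ESs
        using EO R3[OF subAZ[OF a], unfolded diff_zero] by eventually_elim linarith
    qed
    subgoal premises h
    proof -
      have b: "bij tidx" using h by auto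
      show ?thesis unfolding condE_def Let_def ESs
        using ENs[OF b] R2 by eventually_elim linarith
    qed
    subgoal premises h
    proof -
      have b: "bij tidx" and a: "cnt_A zidx V \<noteq> CARD('l)" using h by auto
      show ?thesis unfolding avar_le_def avN1[OF b] avS2[OF a]
        using ENs[OF b] R1 N1 ES by eventually_elim linarith
    qed
    subgoal premises h
    proof -
      have a: "cnt_A zidx V \<noteq> CARD('l)" using h by auto
      show ?thesis unfolding avar_eq_def avS2[OF a] avP
        using ES EO by eventually_elim linarith
    qed
    subgoal unfolding avar_eq_def avP avO by simp
    subgoal unfolding sigma_P_def using ES EO by eventually_elim linarith
    subgoal premises h
    proof -
      have a: "cnt_A zidx V \<noteq> CARD('l)" "cnt_T zidx tidx \<noteq> CARD('l)" using h by auto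
      show ?thesis unfolding avar_eq_def avN3[OF a(2)] avS2[OF a(1)]
        using EN ES by eventually_elim linarith
    qed
    subgoal premises h
    proof -
      have a: "cnt_A zidx V \<noteq> CARD('l)" using h by auto
      show ?thesis unfolding avar_eq_def avS2[OF a(1)] avP
        using ES EO by eventually_elim linarith
    qed
    subgoal unfolding avar_eq_def avP avO by simp
    subgoal unfolding sigma_P_def using EN ES EO by eventually_elim linarith
    done
qed

end
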